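(* Let $r,k\in\mathbb Z$ with $0\le k\le r$ and suppose Assumptions (A1), (A2), (A3) hold. Let $l,\check r\in\mathbb N_0$ and set $j_{\min}:=\min\{\check r,r+1,r^{\mathscr I}_{\mathcal I}+2\}$, $j_{\max}:=\max\{k_{\mathcal J}+1,l,j_{\min}\}$. Then for all $v\in C^{j_{\max}}(\overline I_n,\mathbb R^d)$, $$\sup_{t\in I_n}\|(v-\mathcal J_nv)^{(l)}(t)\|\le C\sum_{j=j_{\min}}^{j_{\max}}\big(\tfrac{\tau_n}{2}\big)^{j-l}\sup_{t\in I_n}\|v^{(j)}(t)\|$$ with $C$ independent of $\tau_n$ and $n$.
   Context: Mesh $t_0<\dots<t_N$, $I_n=(t_{n-1},t_n]$, $\tau_n=t_n-t_{n-1}\le1$; one-sided limits $v(t_n^\pm)$. $T_n(\hat t)=\frac{t_n+t_{n-1}}{2}+\frac{\tau_n}{2}\hat t$. $\|\cdot\|$, $(\cdot,\cdot)$ Euclidean norm/inner product; $P_s$ polynomials of degree $\le s$, $P_{-1}:=\{0\}$; $\delta_{i,j}$ Kronecker symbol. Operators: $\widehat{\mathscr I}$ linear functional, $\widehat{\mathcal I}$ linear operator; $k_{\mathscr I},k_{\mathcal I}\ge0$ smallest integers with well-definedness on $C^{k_{\mathscr I}}([-1,1])$ resp. $C^{k_{\mathcal I}}([-1,1])$; $\widehat{\mathcal I}\hat v\in C^l$ whenever $\hat v\in C^{\max\{k_{\mathcal I},l\}}$. Local: $\mathscr I_n[\varphi]=\frac{\tau_n}{2}\widehat{\mathscr I}[\varphi\circ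 T_n]$, $\mathcal I_n\psi=(\widehat{\mathcal I}(\psi\circ T_n))\circ T_n^{-1}$, componentwise. $k_{\mathcal J}:=\max\{\lfloor k/2\rfloor-1,k_{\mathscr I},k_{\mathcal I}\}$. $r^{\mathscr I}_{\mathcal I,i}\in\mathbb N_0\cup\{-1,\infty\}$ is the largest number such that $\mathscr I_n[\varphi\psi]=\mathscr I_n[(\mathcal I_n\varphi)\psi]$ for all $\varphi\in P_{r^{\mathscr I}_{\mathcal I,i}}(I_n)$, $\psi\in P_i(I_n)$; $r^{\mathscr I}_{\mathcal I}:=r^{\mathscr I}_{\mathcal I,r-k}$. $\mathcal J_nv\in P_r(I_n,\mathbb R^d)$: if $k\ge1$, $(\mathcal J_nv)^{(i)}(t_{n-1}^+)=v^{(i)}(t_{n-1}^+)$, $i=0,\dots,\lfloor (k-1)/2\rfloor$; if $k\ge2$, $(\mathcal J_nv)^{(i)}(t_n^-)=v^{(i)}(t_n^-)$, $i=1,\dots,\lfloor k/2\rfloor$; $\mathscr I_n[((\mathcal J_nv)',\varphi)]+\delta_{0,k}(\mathcal J_nv(t_{n-1}^+),\varphi(t_{n-1}^+))=\mathscr I_n[(\mathcal I_n(v'),\varphi)]+\delta_{0,k}(v(t_{n-1}^+),\varphi(t_{n-1}^+))$ for all $\varphi\in P_{r-k}(I_n,\mathbb R^d)$. (A1): if $\hat\psi\in P_{r-\max\{1,k\}}([-1,1])$ and $\widehat{\mathscr I}[(1-\hat t)^{\lfloor k/2\rfloor}(1+\hat t)^{|\lfloor (k-1)/2\rfloor|}\hat\psi\hat\varphi]=0$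 for all $\hat\varphi\in P_{r-\max\{1,k\}}([-1,1])$, then $\hat\psi\equiv0$. (A2): $\|\widehat{\mathscr I}[\hat\varphi]\|\le\mathfrak C_0\sum_{j=0}^{k_{\mathscr I}}\sup_{[-1,1]}\|\hat\varphi^{(j)}\|$ for all $\hat\varphi\in C^{k_{\mathscr I}}([-1,1],\mathbb R^d)$. (A3): for $0\le l\le k_{\mathscr I}$, $\sup_{[-1,1]}\|(\widehat{\mathcal I}\hat\varphi)^{(l)}\|\le\mathfrak C_1\sum_{j=0}^{\max\{k_{\mathcal I},l\}}\sup_{[-1,1]}\|\hat\varphi^{(j)}\|$ for all $\hat\varphi\in C^{\max\{k_{\mathcal I},l\}}([-1,1],\mathbb R^d)$. *)

theory Defs
  imports "HOL-Analysis.Analysis"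
begin

fun nderiv :: "nat \<Rightarrow> real set \<Rightarrow> (real \<Rightarrow> 'a::real_normed_vector) \<Rightarrow> real \<Rightarrow> 'a" where
  "nderiv 0 S f = f"
| "nderiv (Suc j) S f = (\<lambda>t. vector_derivative (nderiv j S f) (at t within S))"

definition Ck_on :: "nat \<Rightarrow> real set \<Rightarrow> (real \<Rightarrow> 'a::real_normed_vector) \<Rightarrow> bool" where
  "Ck_on k S f \<longleftrightarrow>
     (\<forall>j<k. \<forall>t\<in>S. nderiv j S f differentiable (at t within S)) \<and> continuous_on S (nderiv k S f)"

definition supn :: "nat \<Rightarrow> real set \<Rightarrow> (real \<Rightarrow> 'a::real_normed_vector) \<Rightarrow> real set \<Rightarrow> real" where
  "supn j S f A = Sup ((\<lambda>t. norm (nderiv j S f t)) ` A)"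

section \<open>Polynomials of degree \<le> s (s an integer, P_s = {0} for s < 0)\<close>

definition Pdeg :: "int \<Rightarrow> (real \<Rightarrow> real) set" where
  "Pdeg s = {f. \<exists>c::nat \<Rightarrow> real. f = (\<lambda>t. \<Sum>i<nat (s + 1). c i * t ^ i)}"

definition VPdeg :: "int \<Rightarrow> (real \<Rightarrow> real ^ 'd) set" where
  "VPdeg s = {f. \<exists>c::nat \<Rightarrow> real ^ 'd. f = (\<lambda>t. \<Sum>i<nat (s + 1). t ^ i *\<^sub>R c i)}"

definition Tmap :: "real \<Rightarrow> real \<Rightarrow> real \<Rightarrow> real" where
  "Tmap a b s = (b + a) / 2 + (b - a) / 2 * s"

definition Tinv :: "real \<Rightarrow> real \<Rightarrow> real \<Rightarrow> real" where
  "Tinv a b t = (2 * t - (b + a)) / (b - a)"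

definition compI :: "((real \<Rightarrow> real) \<Rightarrow> real) \<Rightarrow> (real \<Rightarrow> real ^ 'd) \<Rightarrow> real ^ 'd" where
  "compI Ih f = (\<chi> i. Ih (\<lambda>s. f s $ i))"

definition compOp :: "((real \<Rightarrow> real) \<Rightarrow> (real \<Rightarrow> real)) \<Rightarrow> (real \<Rightarrow> real ^ 'd) \<Rightarrow> real \<Rightarrow> real ^ 'd" where
  "compOp Iop f = (\<lambda>t. \<chi> i. Iop (\<lambda>s. f s $ i) t)"

definition locI :: "((real \<Rightarrow> real) \<Rightarrow> real) \<Rightarrow> real \<Rightarrow> real \<Rightarrow> (real \<Rightarrow> real) \<Rightarrow> real" where
  "locI Ih a b f = (b - a) / 2 * Ih (\<lambda>s. f (Tmap a b s))"

definition locOpS :: "((real \<Rightarrow> real) \<Rightarrow> (real \<Rightarrow> real)) \<Rightarrow> real \<Rightarrow> real \<Rightarrow> (real \<Rightarrow> real) \<Rightarrow> real \<Rightarrow> real" where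
  "locOpS Iop a b f = (\<lambda>t. Iop (\<lambda>s. f (Tmap a b s)) (Tinv a b t))"

definition locOpV :: "((real \<Rightarrow> real) \<Rightarrow> (real \<Rightarrow> real)) \<Rightarrow> real \<Rightarrow> real \<Rightarrow> (real \<Rightarrow> real ^ 'd) \<Rightarrow> real \<Rightarrow> real ^ 'd" where
  "locOpV Iop a b f = (\<lambda>t. compOp Iop (\<lambda>s. f (Tmap a b s)) (Tinv a b t))"

definition exact_for :: "((real \<Rightarrow> real) \<Rightarrow> real) \<Rightarrow> ((real \<Rightarrow> real) \<Rightarrow> (real \<Rightarrow> real))
    \<Rightarrow> real \<Rightarrow> real \<Rightarrow> int \<Rightarrow> int \<Rightarrow> bool" where
  "exact_for Ih Iop a b s i \<longleftrightarrow>
     (\<forall>\<phi>\<in>Pdeg s. \<forall>\<psi>\<in>Pdeg i.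
        locI Ih a b (\<lambda>t. \<phi> t * \<psi> t) = locI Ih a b (\<lambda>t. locOpS Iop a b \<phi> t * \<psi> t))"

text \<open>largest number in N0 \<union> {-1, \<infinity>} with the exactness property (as an extended real)\<close>
definition rII :: "((real \<Rightarrow> real) \<Rightarrow> real) \<Rightarrow> ((real \<Rightarrow> real) \<Rightarrow> (real \<Rightarrow> real))
    \<Rightarrow> real \<Rightarrow> real \<Rightarrow> int \<Rightarrow> ereal" where
  "rII Ih Iop a b i = Sup {ereal (real_of_int s) | s. s \<ge> -1 \<and> exact_for Ih Iop a b s i}"

definition jmin :: "((real \<Rightarrow> real) \<Rightarrow> real) \<Rightarrow> ((real \<Rightarrow> real) \<Rightarrow> (real \<Rightarrow> real))
    \<Rightarrow> real \<Rightarrow> real \<Rightarrow> nat \<Rightarrow> nat \<Rightarrow> nat \<Rightarrow> nat" where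
  "jmin Ih Iop a b r k rc =
     (let rr = rII Ih Iop a b (int r - int k) in
      if rr = \<infinity> then min rc (r + 1)
      else min rc (min (r + 1) (nat (\<lfloor>real_of_ereal rr\<rfloor> + 2))))"

definition is_Jn :: "((real \<Rightarrow> real) \<Rightarrow> real) \<Rightarrow> ((real \<Rightarrow> real) \<Rightarrow> (real \<Rightarrow> real))
    \<Rightarrow> nat \<Rightarrow> nat \<Rightarrow> real \<Rightarrow> real \<Rightarrow> (real \<Rightarrow> real ^ 'd) \<Rightarrow> (real \<Rightarrow> real ^ 'd) \<Rightarrow> bool" where
  "is_Jn Ih Iop r k a b v p \<longleftrightarrow>
     p \<in> VPdeg (int r) \<and>
     (k \<ge> 1 \<longrightarrow> (\<forall>i \<le> (k - 1) div 2. nderiv i {a..b} p a = nderiv i {a..b} v a)) \<and>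
     (k \<ge> 2 \<longrightarrow> (\<forall>i \<in> {1..k div 2}. nderiv i {a..b} p b = nderiv i {a..b} v b)) \<and>
     (\<forall>\<phi>\<in>VPdeg (int r - int k).
        locI Ih a b (\<lambda>t. inner (nderiv 1 {a..b} p t) (\<phi> t))
          + (if k = 0 then inner (p a) (\<phi> a) else 0)
        = locI Ih a b (\<lambda>t. inner (locOpV Iop a b (nderiv 1 {a..b} v) t) (\<phi> t))
          + (if k = 0 then inner (v a) (\<phi> a) else 0))"

end

theory Submission
  imports Defs "HOL-Computational_Algebra.Polynomial"
begin

lemma nderiv_Suc': "nderiv (Suc j) S f = nderiv j S (nderiv 1 S f)"
  by (induction j) auto

lemma nderiv_add_index: "nderiv (i + j) S f = nderiv i S (nderiv j S f)"
proof (induction j arbitrary: f)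
  case 0 then show ?case by simp
next
  case (Suc j)
  have "nderiv (i + Suc j) S f = nderiv (Suc (i + j)) S f" by simp
  also have "\<dots> = nderiv (i+j) S (nderiv 1 S f)" by (rule nderiv_Suc')
  also have "\<dots> = nderiv i S (nderiv j S (nderiv 1 S f))" by (rule Suc.IH)
  also have "nderiv j S (nderiv 1 S f) = nderiv (Suc j) S f" by (rule nderiv_Suc'[symmetric])
  finally show ?case .
qed

lemma vd_within_Icc:
  fixes f :: "real \<Rightarrow> 'a::real_normed_vector"
  assumes "x < y" "t \<in> {x..y}" "(f has_vector_derivative f') (at t within {x..y})"
  shows "vector_derivative f (at t within {x..y}) = f'"
  using vector_derivative_within_cbox[of x y t f f'] assms by simp

lemma nderiv_tower:
  fixes f :: "real \<Rightarrow> 'a::real_normed_vector"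
  assumes xy: "x < y" and D0: "\<And>t. t\<in>{x..y} \<Longrightarrow> D 0 t = f t"
    and DD: "\<And>j t. j<m \<Longrightarrow> t\<in>{x..y} \<Longrightarrow> (D j has_vector_derivative D (Suc j) t) (at t within {x..y})"
  shows "j \<le> m \<Longrightarrow> t\<in>{x..y} \<Longrightarrow> nderiv j {x..y} f t = D j t"
proof (induction j arbitrary: t)
  case 0 then show ?case using D0 by simp
next
  case (Suc j)
  have eq: "\<And>s. s \<in> {x..y} \<Longrightarrow> nderiv j {x..y} f s = D j s" using Suc by auto
  have "(nderiv j {x..y} f has_vector_derivative D (Suc j) t) (at t within {x..y})"
    by (rule has_vector_derivative_transform[OF Suc.prems(2) eq DD]) (use Suc.prems in auto)
  then show ?case using vd_within_Icc[OF xy Suc.prems(2)] by simp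
qed

lemma Ck_on_tower:
  fixes f :: "real \<Rightarrow> 'a::real_normed_vector"
  assumes xy: "x < y" and D0: "\<And>t. t\<in>{x..y} \<Longrightarrow> D 0 t = f t"
    and DD: "\<And>j t. j<m \<Longrightarrow> t\<in>{x..y} \<Longrightarrow> (D j has_vector_derivative D (Suc j) t) (at t within {x..y})"
    and cont: "continuous_on {x..y} (D m)"
  shows "Ck_on m {x..y} f" and "\<And>j t. j \<le> m \<Longrightarrow> t\<in>{x..y} \<Longrightarrow> nderiv j {x..y} f t = D j t"
proof -
  note tw = nderiv_tower[OF xy D0 DD]
  show "\<And>j t. j \<le> m \<Longrightarrow> t\<in>{x..y} \<Longrightarrow> nderiv j {x..y} f t = D j t" by (rule tw)
  show "Ck_on m {x..y} f"
    unfolding Ck_on_def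
  proof safe
    fix j t assume j: "j < m" and t: "t \<in> {x..y}"
    have "(nderiv j {x..y} f has_vector_derivative D (Suc j) t) (at t within {x..y})"
      by (rule has_vector_derivative_transform[OF t _ DD[OF j t]]) (use tw j in auto)
    then show "nderiv j {x..y} f differentiable at t within {x..y}"
      by (rule differentiableI_vector)
  next
    show "continuous_on {x..y} (nderiv m {x..y} f)"
      using continuous_on_eq[OF cont] tw by auto
  qed
qed

lemma Ck_on_D:
  fixes f :: "real \<Rightarrow> 'a::real_normed_vector"
  assumes "Ck_on m S f" "j < m" "t \<in> S"
  shows "(nderiv j S f has_vector_derivative nderiv (Suc j) S f t) (at t within S)"
  using assms unfolding Ck_on_def by (auto simp: vector_derivative_works[symmetric])

lemma Ck_on_cont:
  fixes f :: "real \<Rightarrow> 'a::real_normed_vector"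
  assumes "Ck_on m S f" "j \<le> m"
  shows "continuous_on S (nderiv j S f)"
proof (cases "j = m")
  case True then show ?thesis using assms unfolding Ck_on_def by simp
next
  case False
  then have "j < m" using assms by simp
  then show ?thesis using assms unfolding Ck_on_def
    by (auto simp: continuous_on_eq_continuous_within intro: differentiable_imp_continuous_within)
qed

lemma Ck_on_mono:
  fixes f :: "real \<Rightarrow> 'a::real_normed_vector"
  assumes "Ck_on m S f" "m' \<le> m"
  shows "Ck_on m' S f"
  using assms Ck_on_cont[OF assms] unfolding Ck_on_def by auto

lemma nderiv_cong:
  fixes f :: "real \<Rightarrow> 'a::real_normed_vector"
  assumes xy: "x < y" and eq: "\<And>t. t\<in>{x..y} \<Longrightarrow> f t = g t" and "t \<in> {x..y}"
  shows "nderiv j {x..y} f t = nderiv j {x..y} g t"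
  using assms(3)
proof (induction j arbitrary: t)
  case 0 then show ?case using eq by simp
next
  case (Suc j)
  show ?case
  proof (cases "nderiv j {x..y} g differentiable at t within {x..y}")
    case True
    then have d: "(nderiv j {x..y} g has_vector_derivative nderiv (Suc j) {x..y} g t) (at t within {x..y})"
      by (simp add: vector_derivative_works[symmetric])
    have "(nderiv j {x..y} f has_vector_derivative nderiv (Suc j) {x..y} g t) (at t within {x..y})"
      by (rule has_vector_derivative_transform[OF Suc.prems _ d]) (use Suc.IH in auto)
    then show ?thesis using vd_within_Icc[OF xy Suc.prems] by simp
  next
    case False
    have nf: "\<not> nderiv j {x..y} f differentiable at t within {x..y}"
    proof
      assume "nderiv j {x..y} f differentiable at t within {x..y}"
      then have d: "(nderiv j {x..y} f has_vector_derivative vector_derivative (nderiv j {x..y} f) (at t within {x..y})) (at t within {x..y})"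
        by (simp add: vector_derivative_works[symmetric])
      have "(nderiv j {x..y} g has_vector_derivative vector_derivative (nderiv j {x..y} f) (at t within {x..y})) (at t within {x..y})"
        by (rule has_vector_derivative_transform[OF Suc.prems _ d]) (use Suc.IH in auto)
      then show False using False differentiableI_vector by blast
    qed
    have "\<And>D. (nderiv j {x..y} f has_vector_derivative D) (at t within {x..y}) \<longleftrightarrow>
              (nderiv j {x..y} g has_vector_derivative D) (at t within {x..y})"
      using has_vector_derivative_transform[OF Suc.prems, of "nderiv j {x..y} f" "nderiv j {x..y} g"]
        has_vector_derivative_transform[OF Suc.prems, of "nderiv j {x..y} g" "nderiv j {x..y} f"] Suc.IH
      by (metis (no_types, lifting))
    then show ?thesis by (simp add: vector_derivative_def)
  qed
qed

lemma Ck_on_cong: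
  fixes f :: "real \<Rightarrow> 'a::real_normed_vector"
  assumes xy: "x < y" and eq: "\<And>t. t\<in>{x..y} \<Longrightarrow> f t = g t" and "Ck_on m {x..y} f"
  shows "Ck_on m {x..y} g"
proof (rule Ck_on_tower(1)[OF xy, where D="\<lambda>j. nderiv j {x..y} f"])
  show "\<And>t. t \<in> {x..y} \<Longrightarrow> nderiv 0 {x..y} f t = g t" using eq by simp
  show "\<And>j t. j < m \<Longrightarrow> t \<in> {x..y} \<Longrightarrow> (nderiv j {x..y} f has_vector_derivative nderiv (Suc j) {x..y} f t) (at t within {x..y})"
    using Ck_on_D[OF assms(3)] by blast
  show "continuous_on {x..y} (nderiv m {x..y} f)" using Ck_on_cont[OF assms(3)] by simp
qed


declare nderiv.simps(2)[simp del]

lemma Ck_tower_intro: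
  fixes f :: "real \<Rightarrow> 'a::real_normed_vector"
  assumes xy: "x < y" and D0: "\<And>t. t\<in>{x..y} \<Longrightarrow> D 0 t = f t"
    and DD: "\<And>j t. j<m \<Longrightarrow> t\<in>{x..y} \<Longrightarrow> (D j has_vector_derivative D (Suc j) t) (at t within {x..y})"
    and cont: "continuous_on {x..y} (D m)"
  shows "Ck_on m {x..y} f \<and> (\<forall>j\<le>m. \<forall>t\<in>{x..y}. nderiv j {x..y} f t = D j t)"
  using Ck_on_tower[OF assms] by blast

lemma Ck_add:
  fixes f g :: "real \<Rightarrow> 'a::real_normed_vector"
  assumes xy: "x < y" and f: "Ck_on m {x..y} f" and g: "Ck_on m {x..y} g"
  shows "Ck_on m {x..y} (\<lambda>t. f t + g t) \<and> (\<forall>j\<le>m. \<forall>t\<in>{x..y}.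
     nderiv j {x..y} (\<lambda>t. f t + g t) t = nderiv j {x..y} f t + nderiv j {x..y} g t)"
  by (rule Ck_tower_intro[OF xy]) (auto intro!: has_vector_derivative_add Ck_on_D[OF f] Ck_on_D[OF g]
        continuous_on_add Ck_on_cont[OF f] Ck_on_cont[OF g])

lemma Ck_diff:
  fixes f g :: "real \<Rightarrow> 'a::real_normed_vector"
  assumes xy: "x < y" and f: "Ck_on m {x..y} f" and g: "Ck_on m {x..y} g"
  shows "Ck_on m {x..y} (\<lambda>t. f t - g t) \<and> (\<forall>j\<le>m. \<forall>t\<in>{x..y}.
     nderiv j {x..y} (\<lambda>t. f t - g t) t = nderiv j {x..y} f t - nderiv j {x..y} g t)"
  by (rule Ck_tower_intro[OF xy]) (auto intro!: has_vector_derivative_diff Ck_on_D[OF f] Ck_on_D[OF g]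
        continuous_on_diff Ck_on_cont[OF f] Ck_on_cont[OF g])

lemma Ck_scale:
  fixes f :: "real \<Rightarrow> 'a::real_normed_vector"
  assumes xy: "x < y" and f: "Ck_on m {x..y} f"
  shows "Ck_on m {x..y} (\<lambda>t. c *\<^sub>R f t) \<and> (\<forall>j\<le>m. \<forall>t\<in>{x..y}.
     nderiv j {x..y} (\<lambda>t. c *\<^sub>R f t) t = c *\<^sub>R nderiv j {x..y} f t)"
  by (rule Ck_tower_intro[OF xy]) (auto intro!: bounded_linear.has_vector_derivative[OF bounded_linear_scaleR_right] Ck_on_D[OF f]
        continuous_on_scaleR Ck_on_cont[OF f])

lemma Ck_mult_const:
  fixes f :: "real \<Rightarrow> real"
  assumes xy: "x < y" and f: "Ck_on m {x..y} f"
  shows "Ck_on m {x..y} (\<lambda>t. c * f t) \<and> (\<forall>j\<le>m. \<forall>t\<in>{x..y}.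
     nderiv j {x..y} (\<lambda>t. c * f t) t = c * nderiv j {x..y} f t)"
  using Ck_scale[OF xy f, of c] by simp

lemma Ck_const:
  assumes xy: "x < y"
  shows "Ck_on m {x..y} (\<lambda>t. c::'a::real_normed_vector) \<and> (\<forall>j\<le>m. \<forall>t\<in>{x..y}.
     nderiv j {x..y} (\<lambda>t. c) t = (if j = 0 then c else 0))"
  by (rule Ck_tower_intro[OF xy, where D="\<lambda>j t. if j = 0 then c else 0"]) auto

lemma Ck_comp:
  fixes f :: "real \<Rightarrow> real^'n"
  assumes xy: "x < y" and f: "Ck_on m {x..y} f"
  shows "Ck_on m {x..y} (\<lambda>t. f t $ i) \<and> (\<forall>j\<le>m. \<forall>t\<in>{x..y}.
     nderiv j {x..y} (\<lambda>t. f t $ i) t = nderiv j {x..y} f t $ i)"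
proof (rule Ck_tower_intro[OF xy, where D="\<lambda>j t. nderiv j {x..y} f t $ i"])
  show "\<And>j t. j < m \<Longrightarrow> t \<in> {x..y} \<Longrightarrow> ((\<lambda>t. nderiv j {x..y} f t $ i) has_vector_derivative nderiv (Suc j) {x..y} f t $ i) (at t within {x..y})"
    by (rule bounded_linear.has_vector_derivative[OF bounded_linear_vec_nth Ck_on_D[OF f]])
  show "continuous_on {x..y} (\<lambda>t. nderiv m {x..y} f t $ i)"
    using Ck_on_cont[OF f] by (auto intro: continuous_on_component)
qed simp

lemma Ck_vec:
  fixes f :: "real \<Rightarrow> real"
  assumes xy: "x < y" and f: "Ck_on m {x..y} f"
  shows "Ck_on m {x..y} (\<lambda>t. f t *\<^sub>R (c::'a::real_normed_vector)) \<and> (\<forall>j\<le>m. \<forall>t\<in>{x..y}.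
     nderiv j {x..y} (\<lambda>t. f t *\<^sub>R c) t = nderiv j {x..y} f t *\<^sub>R c)"
proof (rule Ck_tower_intro[OF xy, where D="\<lambda>j t. nderiv j {x..y} f t *\<^sub>R c"])
  show "\<And>j t. j < m \<Longrightarrow> t \<in> {x..y} \<Longrightarrow> ((\<lambda>t. nderiv j {x..y} f t *\<^sub>R c) has_vector_derivative nderiv (Suc j) {x..y} f t *\<^sub>R c) (at t within {x..y})"
    by (rule bounded_linear.has_vector_derivative[OF bounded_linear_scaleR_left Ck_on_D[OF f]])
  show "continuous_on {x..y} (\<lambda>t. nderiv m {x..y} f t *\<^sub>R c)"
    using Ck_on_cont[OF f] by (auto intro: continuous_on_scaleR)
qed simp

lemma Ck_sum:
  fixes f :: "'i \<Rightarrow> real \<Rightarrow> 'a::real_normed_vector"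
  assumes xy: "x < y" and fin: "finite A" and f: "\<And>i. i \<in> A \<Longrightarrow> Ck_on m {x..y} (f i)"
  shows "Ck_on m {x..y} (\<lambda>t. \<Sum>i\<in>A. f i t) \<and> (\<forall>j\<le>m. \<forall>t\<in>{x..y}.
     nderiv j {x..y} (\<lambda>t. \<Sum>i\<in>A. f i t) t = (\<Sum>i\<in>A. nderiv j {x..y} (f i) t))"
  using fin f
proof (induction A rule: finite_induct)
  case empty
  then show ?case using Ck_const[OF xy, of m "0::'a"] by simp
next
  case (insert a A)
  have fa: "Ck_on m {x..y} (f a)" using insert by simp
  have IH: "Ck_on m {x..y} (\<lambda>t. \<Sum>i\<in>A. f i t) \<and> (\<forall>j\<le>m. \<forall>t\<in>{x..y}.
     nderiv j {x..y} (\<lambda>t. \<Sum>i\<in>A. f i t) t = (\<Sum>i\<in>A. nderiv j {x..y} (f i) t))" using insert by simp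
  have e: "(\<lambda>t. \<Sum>i\<in>insert a A. f i t) = (\<lambda>t. f a t + (\<Sum>i\<in>A. f i t))"
    using insert by simp
  show ?case unfolding e using Ck_add[OF xy fa conjunct1[OF IH]] IH insert by simp
qed

lemma nderiv_Suc0: "nderiv j S (nderiv (Suc 0) S f) = nderiv (Suc j) S f"
  using nderiv_Suc'[of j S f] by simp

lemma Ck_shift:
  fixes f :: "real \<Rightarrow> 'a::real_normed_vector"
  assumes "Ck_on (Suc m) S f"
  shows "Ck_on m S (nderiv 1 S f)"
  using assms unfolding Ck_on_def by (simp add: nderiv_Suc0)

lemma Ck_unshift:
  fixes f :: "real \<Rightarrow> 'a::real_normed_vector"
  assumes "\<forall>t\<in>S. f differentiable at t within S" "Ck_on m S (nderiv 1 S f)"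
  shows "Ck_on (Suc m) S f"
  unfolding Ck_on_def
proof safe
  fix j t assume "j < Suc m" "t \<in> S"
  then show "nderiv j S f differentiable at t within S"
    using assms unfolding Ck_on_def by (cases j) (auto simp: nderiv_Suc0)
next
  show "continuous_on S (nderiv (Suc m) S f)"
    using assms unfolding Ck_on_def by (simp add: nderiv_Suc0)
qed

lemma Ck_on_diffble:
  fixes f :: "real \<Rightarrow> 'a::real_normed_vector"
  assumes "Ck_on (Suc m) S f" "t \<in> S"
  shows "f differentiable at t within S"
  using assms unfolding Ck_on_def by force

lemma Ck_affine:
  fixes f :: "real \<Rightarrow> 'a::real_normed_vector"
  assumes uw: "u < w" and \<beta>: "\<beta> > 0" and f: "Ck_on m {\<alpha> + \<beta>*u..\<alpha> + \<beta>*w} f"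
  shows "Ck_on m {u..w} (\<lambda>s. f (\<alpha> + \<beta> * s)) \<and> (\<forall>j\<le>m. \<forall>s\<in>{u..w}.
     nderiv j {u..w} (\<lambda>s. f (\<alpha> + \<beta> * s)) s = \<beta>^j *\<^sub>R nderiv j {\<alpha> + \<beta>*u..\<alpha> + \<beta>*w} f (\<alpha> + \<beta> * s))"
proof (rule Ck_tower_intro[OF uw])
  let ?S = "{\<alpha> + \<beta>*u..\<alpha> + \<beta>*w}"
  have img: "(\<lambda>s. \<alpha> + \<beta> * s) ` {u..w} = ?S"
    using image_affinity_atLeastAtMost[of \<beta> \<alpha> u w] uw \<beta> by (simp add: add.commute mult.commute)
  have mem: "\<And>s. s \<in> {u..w} \<Longrightarrow> \<alpha> + \<beta> * s \<in> ?S" using \<beta> by (auto intro: mult_left_mono)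
  show "\<And>j t. j < m \<Longrightarrow> t \<in> {u..w} \<Longrightarrow> ((\<lambda>s. \<beta> ^ j *\<^sub>R nderiv j ?S f (\<alpha> + \<beta> * s)) has_vector_derivative
      \<beta> ^ Suc j *\<^sub>R nderiv (Suc j) ?S f (\<alpha> + \<beta> * t)) (at t within {u..w})"
  proof -
    fix j t assume j: "j < m" and t: "t \<in> {u..w}"
    have a: "((\<lambda>s. \<alpha> + \<beta> * s) has_vector_derivative \<beta>) (at t within {u..w})"
      by (auto intro!: derivative_eq_intros simp: has_real_derivative_iff_has_vector_derivative[symmetric])
    have b: "(nderiv j ?S f has_vector_derivative nderiv (Suc j) ?S f (\<alpha> + \<beta> * t)) (at (\<alpha> + \<beta> * t) within (\<lambda>s. \<alpha> + \<beta> * s) ` {u..w})"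
      unfolding img by (rule Ck_on_D[OF f j mem[OF t]])
    have "((nderiv j ?S f \<circ> (\<lambda>s. \<alpha> + \<beta> * s)) has_vector_derivative \<beta> *\<^sub>R nderiv (Suc j) ?S f (\<alpha> + \<beta> * t)) (at t within {u..w})"
      by (rule vector_diff_chain_within[OF a b])
    then have "((\<lambda>s. \<beta> ^ j *\<^sub>R (nderiv j ?S f \<circ> (\<lambda>s. \<alpha> + \<beta> * s)) s) has_vector_derivative \<beta> ^ j *\<^sub>R (\<beta> *\<^sub>R nderiv (Suc j) ?S f (\<alpha> + \<beta> * t))) (at t within {u..w})"
      by (rule bounded_linear.has_vector_derivative[OF bounded_linear_scaleR_right])
    then show "?thesis j t" by (simp add: o_def mult.commute)
  qed
  show "continuous_on {u..w} (\<lambda>s. \<beta> ^ m *\<^sub>R nderiv m ?S f (\<alpha> + \<beta> * s))"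
  proof -
    have "continuous_on {u..w} (nderiv m ?S f \<circ> (\<lambda>s. \<alpha> + \<beta> * s))"
      by (rule continuous_on_compose) (auto intro!: continuous_intros simp: img Ck_on_cont[OF f])
    then show ?thesis by (auto intro: continuous_on_scaleR simp: o_def)
  qed
qed simp


lemma Ck_prod:
  fixes f :: "real \<Rightarrow> real" and g :: "real \<Rightarrow> 'a::real_normed_vector"
  assumes xy: "x < y"
  shows "Ck_on m {x..y} f \<Longrightarrow> Ck_on m {x..y} g \<Longrightarrow>
    Ck_on m {x..y} (\<lambda>t. f t *\<^sub>R g t) \<and> (\<forall>j\<le>m. \<forall>t\<in>{x..y}.
     norm (nderiv j {x..y} (\<lambda>t. f t *\<^sub>R g t) t) \<le> 2^j * (\<Sum>i\<le>j. \<bar>nderiv i {x..y} f t\<bar>) * (\<Sum>i\<le>j. norm (nderiv i {x..y} g t)))"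
proof (induction m arbitrary: f g)
  case 0
  have "continuous_on {x..y} (\<lambda>t. f t *\<^sub>R g t)"
    using 0 unfolding Ck_on_def by (auto intro: continuous_on_scaleR)
  then show ?case unfolding Ck_on_def by simp
next
  case (Suc m)
  let ?I = "{x..y}"
  have f: "Ck_on (Suc m) ?I f" and g: "Ck_on (Suc m) ?I g" by fact+
  have f1: "Ck_on m ?I (nderiv 1 ?I f)" and g1: "Ck_on m ?I (nderiv 1 ?I g)"
    using Ck_shift f g by auto
  have fm: "Ck_on m ?I f" and gm: "Ck_on m ?I g" using Ck_on_mono[OF f, of m] Ck_on_mono[OF g, of m] by auto
  have IH1: "Ck_on m ?I (\<lambda>t. nderiv 1 ?I f t *\<^sub>R g t) \<and> (\<forall>j\<le>m. \<forall>t\<in>?I.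
     norm (nderiv j ?I (\<lambda>t. nderiv 1 ?I f t *\<^sub>R g t) t) \<le> 2^j * (\<Sum>i\<le>j. \<bar>nderiv i ?I (nderiv 1 ?I f) t\<bar>) * (\<Sum>i\<le>j. norm (nderiv i ?I g t)))"
    by (rule Suc.IH[OF f1 gm])
  have IH2: "Ck_on m ?I (\<lambda>t. f t *\<^sub>R nderiv 1 ?I g t) \<and> (\<forall>j\<le>m. \<forall>t\<in>?I.
     norm (nderiv j ?I (\<lambda>t. f t *\<^sub>R nderiv 1 ?I g t) t) \<le> 2^j * (\<Sum>i\<le>j. \<bar>nderiv i ?I f t\<bar>) * (\<Sum>i\<le>j. norm (nderiv i ?I (nderiv 1 ?I g) t)))"
    by (rule Suc.IH[OF fm g1])
  define u where "u = (\<lambda>t. nderiv 1 ?I f t *\<^sub>R g t + f t *\<^sub>R nderiv 1 ?I g t)"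
  have U: "Ck_on m ?I u \<and> (\<forall>j\<le>m. \<forall>t\<in>?I. nderiv j ?I u t =
      nderiv j ?I (\<lambda>t. nderiv 1 ?I f t *\<^sub>R g t) t + nderiv j ?I (\<lambda>t. f t *\<^sub>R nderiv 1 ?I g t) t)"
    unfolding u_def by (rule Ck_add[OF xy conjunct1[OF IH1] conjunct1[OF IH2]])
  have hd: "((\<lambda>t. f t *\<^sub>R g t) has_vector_derivative u t) (at t within ?I)" if t: "t \<in> ?I" for t
  proof -
    have a: "(f has_vector_derivative nderiv 1 ?I f t) (at t within ?I)"
      using Ck_on_D[OF f _ t, of 0] by simp
    have b: "(g has_vector_derivative nderiv 1 ?I g t) (at t within ?I)"
      using Ck_on_D[OF g _ t, of 0] by simp
    have a': "(f has_field_derivative nderiv 1 ?I f t) (at t within ?I)"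
      using a by (simp add: has_real_derivative_iff_has_vector_derivative)
    show ?thesis using has_vector_derivative_scaleR[OF a' b] unfolding u_def by (simp add: add.commute)
  qed
  have nd1: "nderiv 1 ?I (\<lambda>t. f t *\<^sub>R g t) t = u t" if "t \<in> ?I" for t
    using vd_within_Icc[OF xy that hd[OF that]] by (simp add: nderiv.simps(2))
  have C1: "Ck_on m ?I (nderiv 1 ?I (\<lambda>t. f t *\<^sub>R g t))"
    by (rule Ck_on_cong[OF xy _ conjunct1[OF U]]) (use nd1 in auto)
  have CS: "Ck_on (Suc m) ?I (\<lambda>t. f t *\<^sub>R g t)"
    by (rule Ck_unshift[OF _ C1]) (use hd differentiableI_vector in blast)
  have sh: "(\<Sum>i\<le>j. a (Suc i)) \<le> (\<Sum>i\<le>Suc j. a i)" if "\<And>i. a i \<ge> 0" for a :: "nat \<Rightarrow> real" and j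
    by (subst sum.atMost_Suc_shift) (simp add: that)
  have mono: "(\<Sum>i\<le>j. a i) \<le> (\<Sum>i\<le>Suc j. a i)" if "\<And>i. a i \<ge> 0" for a :: "nat \<Rightarrow> real" and j
    using that by simp
  have bound: "norm (nderiv j ?I (\<lambda>t. f t *\<^sub>R g t) t) \<le> 2^j * (\<Sum>i\<le>j. \<bar>nderiv i ?I f t\<bar>) * (\<Sum>i\<le>j. norm (nderiv i ?I g t))"
    if j: "j \<le> Suc m" and t: "t \<in> ?I" for j t
  proof (cases j)
    case 0 then show ?thesis by simp
  next
    case (Suc j')
    have j': "j' \<le> m" using j Suc by simp
    let ?F = "\<lambda>i. \<bar>nderiv i ?I f t\<bar>" and ?G = "\<lambda>i. norm (nderiv i ?I g t)"
    have "nderiv j ?I (\<lambda>t. f t *\<^sub>R g t) t = nderiv j' ?I (nderiv 1 ?I (\<lambda>t. f t *\<^sub>R g t)) t"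
      using Suc nderiv_Suc' by metis
    also have "\<dots> = nderiv j' ?I u t" by (rule nderiv_cong[OF xy nd1 t])
    also have "\<dots> = nderiv j' ?I (\<lambda>t. nderiv 1 ?I f t *\<^sub>R g t) t + nderiv j' ?I (\<lambda>t. f t *\<^sub>R nderiv 1 ?I g t) t"
      using U j' t by blast
    finally have e: "nderiv j ?I (\<lambda>t. f t *\<^sub>R g t) t = \<dots>" .
    have n1: "norm (nderiv j' ?I (\<lambda>t. nderiv 1 ?I f t *\<^sub>R g t) t) \<le> 2^j' * (\<Sum>i\<le>j'. ?F (Suc i)) * (\<Sum>i\<le>j'. ?G i)"
      using IH1 j' t by (simp add: nderiv_Suc0)
    have n2: "norm (nderiv j' ?I (\<lambda>t. f t *\<^sub>R nderiv 1 ?I g t) t) \<le> 2^j' * (\<Sum>i\<le>j'. ?F i) * (\<Sum>i\<le>j'. ?G (Suc i))"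
      using IH2 j' t by (simp add: nderiv_Suc0)
    have s1: "(\<Sum>i\<le>j'. ?F (Suc i)) \<le> (\<Sum>i\<le>j. ?F i)" using sh[of ?F j'] Suc by simp
    have s2: "(\<Sum>i\<le>j'. ?G (Suc i)) \<le> (\<Sum>i\<le>j. ?G i)" using sh[of ?G j'] Suc by simp
    have s3: "(\<Sum>i\<le>j'. ?F i) \<le> (\<Sum>i\<le>j. ?F i)" using mono[of ?F j'] Suc by simp
    have s4: "(\<Sum>i\<le>j'. ?G i) \<le> (\<Sum>i\<le>j. ?G i)" using mono[of ?G j'] Suc by simp
    have p0: "0 \<le> (\<Sum>i\<le>j'. ?F i)" "0 \<le> (\<Sum>i\<le>j'. ?G i)" "0 \<le> (\<Sum>i\<le>j'. ?F (Suc i))" "0 \<le> (\<Sum>i\<le>j'. ?G (Suc i))"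
      by (auto intro: sum_nonneg)
    have p1: "0 \<le> (\<Sum>i\<le>j. ?F i)" by (auto intro: sum_nonneg)
    have m1: "(\<Sum>i\<le>j'. ?F (Suc i)) * (\<Sum>i\<le>j'. ?G i) \<le> (\<Sum>i\<le>j. ?F i) * (\<Sum>i\<le>j. ?G i)"
      by (rule mult_mono[OF s1 s4 p1 p0(2)])
    have m2: "(\<Sum>i\<le>j'. ?F i) * (\<Sum>i\<le>j'. ?G (Suc i)) \<le> (\<Sum>i\<le>j. ?F i) * (\<Sum>i\<le>j. ?G i)"
      by (rule mult_mono[OF s3 s2 p1 p0(4)])
    have "norm (nderiv j ?I (\<lambda>t. f t *\<^sub>R g t) t) \<le> 2^j' * (\<Sum>i\<le>j'. ?F (Suc i)) * (\<Sum>i\<le>j'. ?G i) + 2^j' * (\<Sum>i\<le>j'. ?F i) * (\<Sum>i\<le>j'. ?G (Suc i))"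
      unfolding e using norm_triangle_le n1 n2 by (smt (verit))
    also have "\<dots> \<le> 2^j' * ((\<Sum>i\<le>j. ?F i) * (\<Sum>i\<le>j. ?G i)) + 2^j' * ((\<Sum>i\<le>j. ?F i) * (\<Sum>i\<le>j. ?G i))"
      by (simp only: mult.assoc) (intro add_mono mult_left_mono m1 m2; simp)
    also have "\<dots> = 2^j * (\<Sum>i\<le>j. ?F i) * (\<Sum>i\<le>j. ?G i)" using Suc by simp
    finally show ?thesis .
  qed
  show ?case using CS bound by blast
qed

lemma cont_bdd:
  fixes h :: "real \<Rightarrow> 'a::real_normed_vector"
  assumes "continuous_on {x..y} h" "A \<subseteq> {x..y}"
  shows "bdd_above ((\<lambda>t. norm (h t)) ` A)"
proof -
  have "compact ((\<lambda>t. norm (h t)) ` {x..y})"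
    by (rule compact_continuous_image) (auto intro: continuous_on_norm assms)
  then have "bdd_above ((\<lambda>t. norm (h t)) ` {x..y})"
    by (intro bounded_imp_bdd_above compact_imp_bounded)
  then show ?thesis using assms(2) by (meson bdd_above_mono image_mono)
qed

lemma supn_upper:
  fixes f :: "real \<Rightarrow> 'a::real_normed_vector"
  assumes "Ck_on m {x..y} f" "j \<le> m" "A \<subseteq> {x..y}" "t \<in> A"
  shows "norm (nderiv j {x..y} f t) \<le> supn j {x..y} f A"
  unfolding supn_def
  by (rule cSUP_upper[OF assms(4) cont_bdd[OF Ck_on_cont[OF assms(1,2)] assms(3)]])

lemma supn_least:
  fixes f :: "real \<Rightarrow> 'a::real_normed_vector"
  assumes "A \<noteq> {}" "\<And>t. t \<in> A \<Longrightarrow> norm (nderiv j S f t) \<le> B"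
  shows "supn j S f A \<le> B"
  unfolding supn_def using assms by (intro cSUP_least) auto

lemma supn_nonneg:
  fixes f :: "real \<Rightarrow> 'a::real_normed_vector"
  assumes "Ck_on m {x..y} f" "j \<le> m" "A \<subseteq> {x..y}" "A \<noteq> {}"
  shows "0 \<le> supn j {x..y} f A"
proof -
  obtain t where "t \<in> A" using assms by auto
  then show ?thesis using supn_upper[OF assms(1-3)] norm_ge_zero order_trans by metis
qed

lemma supn_upper_open:
  fixes f :: "real \<Rightarrow> 'a::real_normed_vector"
  assumes xy: "x < y" and f: "Ck_on m {x..y} f" and j: "j \<le> m" and t: "t \<in> {x..y}"
  shows "norm (nderiv j {x..y} f t) \<le> supn j {x..y} f {x<..y}"
proof -
  have c: "continuous_on (closure {x<..y}) (\<lambda>t. norm (nderiv j {x..y} f t))"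
    using xy Ck_on_cont[OF f j] by (auto intro: continuous_on_norm)
  have u: "\<And>s. s \<in> {x<..y} \<Longrightarrow> norm (nderiv j {x..y} f s) \<le> supn j {x..y} f {x<..y}"
    by (rule supn_upper[OF f j]) auto
  show ?thesis
    by (rule continuous_le_on_closure[OF c _ u]) (use xy t in auto)
qed

lemma Ck_poly:
  fixes p :: "real poly"
  assumes xy: "x < y"
  shows "Ck_on m {x..y} (poly p) \<and> (\<forall>j\<le>m. \<forall>t\<in>{x..y}. nderiv j {x..y} (poly p) t = poly ((pderiv ^^ j) p) t)"
proof (rule Ck_tower_intro[OF xy])
  show "\<And>j t. j < m \<Longrightarrow> t \<in> {x..y} \<Longrightarrow> (poly ((pderiv ^^ j) p) has_vector_derivative poly ((pderiv ^^ Suc j) p) t) (at t within {x..y})"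
    by (simp add: has_real_derivative_iff_has_vector_derivative[symmetric] poly_DERIV has_field_derivative_at_within)
  show "continuous_on {x..y} (poly ((pderiv ^^ m) p))"
    by (auto intro: continuous_intros)
qed simp

lemma Ck_poly_all:
  fixes p :: "real poly"
  assumes xy: "x < y"
  shows "Ck_on m {x..y} (poly p)"
  using Ck_poly[OF xy] by blast

lemma poly_sum_monom: "(\<lambda>t. \<Sum>i<n. (c i::real) * t ^ i) = poly (\<Sum>i<n. monom (c i) i)"
  by (rule ext) (simp add: poly_sum poly_monom)


lemma FD_inj_bound:
  fixes a :: "nat \<Rightarrow> nat \<Rightarrow> real"
  assumes "\<And>c. (\<forall>j<N. (\<Sum>i<n. a j i * c i) = 0) \<Longrightarrow> \<forall>i<n. c i = 0"
  shows "\<exists>K\<ge>0. \<forall>c. (\<Sum>i<n. \<bar>c i\<bar>) \<le> K * (\<Sum>j<N. \<bar>\<Sum>i<n. a j i * c i\<bar>)"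
  using assms
proof (induction n arbitrary: a)
  case 0
  show ?case by (rule exI[of _ 0]) simp
next
  case (Suc n)
  have inj: "\<And>c. (\<forall>j<N. (\<Sum>i<Suc n. a j i * c i) = 0) \<Longrightarrow> \<forall>i<Suc n. c i = 0" by fact
  have "\<exists>j0<N. a j0 n \<noteq> 0"
  proof (rule ccontr)
    assume "\<not> (\<exists>j0<N. a j0 n \<noteq> 0)"
    then have z: "\<forall>j<N. a j n = 0" by simp
    let ?c = "\<lambda>i. if i = n then 1 else (0::real)"
    have "\<forall>j<N. (\<Sum>i<Suc n. a j i * ?c i) = 0" using z by simp
    then have "\<forall>i<Suc n. ?c i = 0" by (rule inj)
    then show False by auto
  qed
  then obtain j0 where j0: "j0 < N" "a j0 n \<noteq> 0" by blast
  define piv where "piv = a j0 n"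
  define a' where "a' = (\<lambda>j i. a j i - a j n / piv * a j0 i)"
  have key: "(\<Sum>i<n. a' j i * c i) = (\<Sum>i<Suc n. a j i * c i) - a j n / piv * (\<Sum>i<Suc n. a j0 i * c i)" for j c
  proof -
    have "(\<Sum>i<n. a' j i * c i) = (\<Sum>i<n. a j i * c i) - a j n / piv * (\<Sum>i<n. a j0 i * c i)"
      unfolding a'_def by (simp add: algebra_simps sum_subtractf sum_distrib_left)
    also have "\<dots> = (\<Sum>i<Suc n. a j i * c i) - a j n / piv * (\<Sum>i<Suc n. a j0 i * c i)"
      using j0 by (simp add: piv_def field_simps)
    finally show ?thesis .
  qed
  have inj': "\<forall>i<n. c' i = 0" if h: "\<forall>j<N. (\<Sum>i<n. a' j i * c' i) = 0" for c'
  proof -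
    define c where "c = c'(n := - (\<Sum>i<n. a j0 i * c' i) / piv)"
    have cc: "(\<Sum>i<n. b i * c i) = (\<Sum>i<n. b i * c' i)" for b
      unfolding c_def by (intro sum.cong) auto
    have R0: "(\<Sum>i<Suc n. a j0 i * c i) = 0"
      using j0 by (simp add: cc piv_def c_def field_simps)
    have "\<forall>j<N. (\<Sum>i<Suc n. a j i * c i) = 0"
    proof safe
      fix j assume "j < N"
      have "(\<Sum>i<n. a' j i * c i) = 0" using h \<open>j<N\<close> by (simp add: cc)
      then show "(\<Sum>i<Suc n. a j i * c i) = 0" using key[of j c] R0 by simp
    qed
    then have "\<forall>i<Suc n. c i = 0" by (rule inj)
    then show ?thesis unfolding c_def by (metis fun_upd_other less_SucI nat_neq_iff)
  qed
  obtain K' where K': "K' \<ge> 0" "\<And>c. (\<Sum>i<n. \<bar>c i\<bar>) \<le> K' * (\<Sum>j<N. \<bar>\<Sum>i<n. a' j i * c i\<bar>)"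
    using Suc.IH[of a'] inj' by blast
  define X where "X = (\<Sum>j<N. \<bar>a j n / piv\<bar>)"
  define Am where "Am = (\<Sum>i<n. \<bar>a j0 i\<bar>)"
  have X0: "X \<ge> 0" "Am \<ge> 0" unfolding X_def Am_def by (auto intro: sum_nonneg)
  have pivp: "\<bar>piv\<bar> > 0" using j0 piv_def by simp
  define K where "K = K' * (1 + X) + (1 + Am * (K' * (1 + X))) / \<bar>piv\<bar>"
  have K0: "K \<ge> 0" unfolding K_def using K' X0 pivp by (auto intro!: add_nonneg_nonneg mult_nonneg_nonneg divide_nonneg_pos)
  show ?case
  proof (intro exI[of _ K] conjI allI K0)
    fix c :: "nat \<Rightarrow> real"
    define R where "R = (\<lambda>j. \<Sum>i<Suc n. a j i * c i)"
    define S where "S = (\<Sum>j<N. \<bar>R j\<bar>)"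
    have S0: "S \<ge> 0" unfolding S_def by (auto intro: sum_nonneg)
    have RS: "\<bar>R j0\<bar> \<le> S" unfolding S_def using j0 by (intro member_le_sum) auto
    have "(\<Sum>j<N. \<bar>\<Sum>i<n. a' j i * c i\<bar>) = (\<Sum>j<N. \<bar>R j - a j n / piv * R j0\<bar>)"
      unfolding R_def using key by simp
    also have "\<dots> \<le> (\<Sum>j<N. \<bar>R j\<bar> + \<bar>a j n / piv\<bar> * \<bar>R j0\<bar>)"
    proof (intro sum_mono)
      fix j
      show "\<bar>R j - a j n / piv * R j0\<bar> \<le> \<bar>R j\<bar> + \<bar>a j n / piv\<bar> * \<bar>R j0\<bar>"
        using abs_triangle_ineq4[of "R j" "a j n / piv * R j0"] by (simp add: abs_mult)
    qed
    also have "\<dots> = S + X * \<bar>R j0\<bar>" unfolding S_def X_def by (simp add: sum.distrib sum_distrib_right)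
    also have "\<dots> \<le> S + X * S" using RS X0 by (simp add: mult_left_mono)
    finally have A1: "(\<Sum>j<N. \<bar>\<Sum>i<n. a' j i * c i\<bar>) \<le> (1 + X) * S" by (simp add: algebra_simps)
    have B1: "(\<Sum>i<n. \<bar>c i\<bar>) \<le> K' * (1 + X) * S"
      using K'(2)[of c] A1 K'(1) by (smt (verit, ccfv_threshold) mult.assoc mult_left_mono)
    have cn: "c n = (R j0 - (\<Sum>i<n. a j0 i * c i)) / piv"
      unfolding R_def using pivp by (simp add: piv_def field_simps)
    have "\<bar>\<Sum>i<n. a j0 i * c i\<bar> \<le> (\<Sum>i<n. \<bar>a j0 i\<bar> * \<bar>c i\<bar>)"
      by (rule order_trans[OF sum_abs]) (simp add: abs_mult)
    also have "\<dots> \<le> (\<Sum>i<n. Am * \<bar>c i\<bar>)"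
      by (intro sum_mono mult_right_mono) (auto simp: Am_def intro: member_le_sum)
    also have "\<dots> = Am * (\<Sum>i<n. \<bar>c i\<bar>)" by (simp add: sum_distrib_left)
    also have "\<dots> \<le> Am * (K' * (1 + X) * S)" using B1 X0 by (simp add: mult_left_mono)
    finally have B2: "\<bar>\<Sum>i<n. a j0 i * c i\<bar> \<le> Am * (K' * (1 + X) * S)" .
    have "\<bar>c n\<bar> = \<bar>R j0 - (\<Sum>i<n. a j0 i * c i)\<bar> / \<bar>piv\<bar>" using cn by simp
    also have "\<dots> \<le> (S + Am * (K' * (1 + X) * S)) / \<bar>piv\<bar>"
      using RS B2 pivp by (intro divide_right_mono) (auto intro: order_trans[OF abs_triangle_ineq4])
    finally have B3: "\<bar>c n\<bar> \<le> (1 + Am * (K' * (1 + X))) / \<bar>piv\<bar> * S" by (simp add: algebra_simps)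
    have "(\<Sum>i<Suc n. \<bar>c i\<bar>) = (\<Sum>i<n. \<bar>c i\<bar>) + \<bar>c n\<bar>" by simp
    also have "\<dots> \<le> K' * (1 + X) * S + (1 + Am * (K' * (1 + X))) / \<bar>piv\<bar> * S" using B1 B3 by simp
    also have "\<dots> = K * S" unfolding K_def by (simp add: algebra_simps)
    finally show "(\<Sum>i<Suc n. \<bar>c i\<bar>) \<le> K * (\<Sum>j<N. \<bar>\<Sum>i<Suc n. a j i * c i\<bar>)"
      unfolding S_def R_def .
  qed
qed


lemma pdeg_iff: "f \<in> Pdeg s \<longleftrightarrow> (\<exists>p. f = poly p \<and> (if s < 0 then p = 0 else degree p \<le> nat s))"
proof
  assume "f \<in> Pdeg s"
  then obtain c where f: "f = (\<lambda>t. \<Sum>i<nat (s + 1). c i * t ^ i)" unfolding Pdeg_def by blast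
  define p where "p = (\<Sum>i<nat (s + 1). monom (c i) i)"
  have fp: "f = poly p" unfolding f p_def by (rule poly_sum_monom)
  show "\<exists>p. f = poly p \<and> (if s < 0 then p = 0 else degree p \<le> nat s)"
  proof (intro exI[of _ p] conjI fp)
    show "if s < 0 then p = 0 else degree p \<le> nat s"
    proof (cases "s < 0")
      case True then show ?thesis by (simp add: p_def)
    next
      case False
      have "degree p \<le> nat s"
      proof (rule degree_le)
        show "\<forall>i>nat s. coeff p i = 0" unfolding p_def using False
          by (auto simp: coeff_sum coeff_monom intro!: sum.neutral)
      qed
      then show ?thesis using False by simp
    qed
  qed
next
  assume "\<exists>p. f = poly p \<and> (if s < 0 then p = 0 else degree p \<le> nat s)"
  then obtain p where f: "f = poly p" and d: "if s < 0 then p = 0 else degree p \<le> nat s" by blast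
  show "f \<in> Pdeg s" unfolding Pdeg_def
  proof (intro CollectI exI[of _ "coeff p"] ext)
    fix t :: real
    show "f t = (\<Sum>i<nat (s + 1). coeff p i * t ^ i)"
    proof (cases "s < 0")
      case True then show ?thesis using d f by simp
    next
      case False
      then have dg: "degree p < nat (s + 1)" using d by simp
      have "f t = (\<Sum>i\<le>degree p. coeff p i * t ^ i)" unfolding f by (rule poly_altdef)
      also have "\<dots> = (\<Sum>i<nat (s + 1). coeff p i * t ^ i)"
        by (rule sum.mono_neutral_left) (use dg in \<open>auto simp: coeff_eq_0\<close>)
      finally show ?thesis .
    qed
  qed
qed

lemma pdeg_poly: "int (degree p) \<le> s \<Longrightarrow> poly p \<in> Pdeg s"
proof -
  assume a: "int (degree p) \<le> s"
  then have "\<not> s < 0" "degree p \<le> nat s" by auto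
  then show ?thesis using pdeg_iff[of "poly p" s] by auto
qed

lemma pdeg_zero: "(\<lambda>t. 0) \<in> Pdeg s"
  using pdeg_iff[of "\<lambda>t. 0" s] by (auto intro!: exI[of _ 0])

lemma pdeg_elim:
  assumes "f \<in> Pdeg s"
  obtains p where "f = poly p" "s < 0 \<Longrightarrow> p = 0" "s \<ge> 0 \<Longrightarrow> int (degree p) \<le> s"
  using assms pdeg_iff[of f s] by (metis int_nat_eq le_nat_iff linorder_not_less zle_int)

lemma root_order_le:
  fixes p :: "real poly"
  shows "p \<noteq> 0 \<Longrightarrow> (\<forall>i<n. poly ((pderiv ^^ i) p) c = 0) \<Longrightarrow> n \<le> order c p"
proof (induction n arbitrary: p)
  case 0 then show ?case by simp
next
  case (Suc n)
  have r: "poly p c = 0" using Suc.prems(2) by (metis funpow_0 zero_less_Suc)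
  have dp: "pderiv p \<noteq> 0"
  proof
    assume "pderiv p = 0"
    then obtain h where "p = [:h:]" using pderiv_iszero by blast
    then show False using r Suc.prems(1) by simp
  qed
  have "\<forall>i<n. poly ((pderiv ^^ i) (pderiv p)) c = 0"
    using Suc.prems(2) by (metis Suc_mono funpow_Suc_right o_apply)
  then have "n \<le> order c (pderiv p)" using Suc.IH dp by blast
  then show ?case using order_pderiv[OF Suc.prems(1) r] by simp
qed

lemma factor_two:
  fixes q :: "real poly"
  assumes a1: "\<forall>i<\<alpha>. poly ((pderiv ^^ i) q) 1 = 0" and a2: "\<forall>i<\<beta>. poly ((pderiv ^^ i) q) (-1) = 0"
  obtains \<psi> where "q = [:-1, 1:] ^ \<alpha> * [:1, 1:] ^ \<beta> * \<psi>"
proof (cases "q = 0")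
  case True then show ?thesis using that[of 0] by simp
next
  case False
  have o2: "\<beta> \<le> order (-1) q" using root_order_le[OF False a2] .
  have "[:1, 1:] ^ \<beta> dvd q" using order_1[of "-1" q] power_le_dvd[OF _ o2] by simp
  then obtain r1 where q: "q = [:1, 1:] ^ \<beta> * r1" by (auto elim: dvdE)
  have o1: "\<alpha> \<le> order 1 q" using root_order_le[OF False a1] .
  have "poly ([:1, 1::real:] ^ \<beta>) 1 \<noteq> 0" by simp
  then have z: "order 1 ([:1, 1::real:] ^ \<beta>) = 0" using order_root by blast
  have "order 1 q = order 1 ([:1, 1::real:] ^ \<beta>) + order 1 r1" using False unfolding q by (rule order_mult)
  then have "\<alpha> \<le> order 1 r1" using o1 z by simp
  then have "[:-1, 1:] ^ \<alpha> dvd r1" using order_1[of 1 r1] power_le_dvd by blast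
  then obtain \<psi> where "r1 = [:-1, 1:] ^ \<alpha> * \<psi>" by (auto elim: dvdE)
  then show ?thesis using that[of \<psi>] q by (simp add: algebra_simps)
qed


abbreviation "II \<equiv> {-1..(1::real)}"

locale refset =
  fixes r k kI kIop :: nat
    and Ih :: "(real \<Rightarrow> real) \<Rightarrow> real"
    and Iop :: "(real \<Rightarrow> real) \<Rightarrow> (real \<Rightarrow> real)"
  assumes kr: "k \<le> r"
    and lin_Ih: "\<And>f g c. Ck_on kI {-1..1} f \<Longrightarrow> Ck_on kI {-1..1} g \<Longrightarrow>
        Ih (\<lambda>t. f t + g t) = Ih f + Ih g \<and> Ih (\<lambda>t. c * f t) = c * Ih f"
    and lin_Iop: "\<And>f g c. Ck_on kIop {-1..1} f \<Longrightarrow> Ck_on kIop {-1..1} g \<Longrightarrow>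
        (\<forall>t\<in>{-1..1}. Iop (\<lambda>s. f s + g s) t = Iop f t + Iop g t \<and> Iop (\<lambda>s. c * f s) t = c * Iop f t)"
    and reg_Iop: "\<And>m f. Ck_on (max kIop m) {-1..1} f \<Longrightarrow> Ck_on m {-1..1} (Iop f)"
    and A1: "\<And>\<psi>. \<psi> \<in> Pdeg (int r - int (max 1 k)) \<Longrightarrow>
        (\<forall>\<phi>\<in>Pdeg (int r - int (max 1 k)).
           Ih (\<lambda>t. (1 - t) ^ (k div 2) * (1 + t) ^ nat \<bar>(int k - 1) div 2\<bar> * \<psi> t * \<phi> t) = 0)
        \<Longrightarrow> \<psi> = (\<lambda>_. 0)"
    and A2s: "\<exists>C0. \<forall>g. Ck_on kI {-1..1} g \<longrightarrow> \<bar>Ih g\<bar> \<le> C0 * (\<Sum>j\<le>kI. supn j {-1..1} g {-1..1})"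
    and A3s: "\<exists>C1. \<forall>m\<le>kI. \<forall>g. Ck_on (max kIop m) {-1..1} g \<longrightarrow>
        supn m {-1..1} (Iop g) {-1..1} \<le> C1 * (\<Sum>j\<le>max kIop m. supn j {-1..1} g {-1..1})"
begin

lemma m11: "(-1::real) < 1" by simp

lemma Ih_add: "Ck_on kI II f \<Longrightarrow> Ck_on kI II g \<Longrightarrow> Ih (\<lambda>t. f t + g t) = Ih f + Ih g"
  using lin_Ih by blast

lemma Ih_cmult: "Ck_on kI II f \<Longrightarrow> Ih (\<lambda>t. c * f t) = c * Ih f"
  using lin_Ih by blast

lemma Ih_zero: "Ih (\<lambda>t. 0) = 0"
proof -
  have c: "Ck_on kI II (\<lambda>t. 0::real)" using Ck_const[OF m11] by blast
  have "Ih (\<lambda>t. 0 * (0::real)) = 0 * Ih (\<lambda>t. 0)" by (rule Ih_cmult[OF c])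
  then show ?thesis by simp
qed

lemma Ih_diff: "Ck_on kI II f \<Longrightarrow> Ck_on kI II g \<Longrightarrow> Ih (\<lambda>t. f t - g t) = Ih f - Ih g"
proof -
  assume f: "Ck_on kI II f" and g: "Ck_on kI II g"
  have g': "Ck_on kI II (\<lambda>t. (-1) * g t)" using Ck_mult_const[OF m11 g] by blast
  have "Ih (\<lambda>t. f t + (-1) * g t) = Ih f + Ih (\<lambda>t. (-1) * g t)" by (rule Ih_add[OF f g'])
  also have "Ih (\<lambda>t. (-1) * g t) = - Ih g" using Ih_cmult[OF g, of "-1"] by simp
  finally show ?thesis by simp
qed

lemma Ih_sum: "finite A \<Longrightarrow> (\<And>i. i \<in> A \<Longrightarrow> Ck_on kI II (f i)) \<Longrightarrow>
    Ih (\<lambda>t. \<Sum>i\<in>A. c i * f i t) = (\<Sum>i\<in>A. c i * Ih (f i))"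
proof (induction A rule: finite_induct)
  case empty then show ?case using Ih_zero by simp
next
  case (insert a A)
  have fa: "Ck_on kI II (\<lambda>t. c a * f a t)" using Ck_mult_const[OF m11] insert by blast
  have fA: "Ck_on kI II (\<lambda>t. \<Sum>i\<in>A. c i * f i t)"
    using Ck_sum[OF m11 insert(1), where f="\<lambda>i t. c i * f i t" and m=kI] Ck_mult_const[OF m11] insert by blast
  have "Ih (\<lambda>t. \<Sum>i\<in>insert a A. c i * f i t) = Ih (\<lambda>t. c a * f a t + (\<Sum>i\<in>A. c i * f i t))"
    using insert by simp
  also have "\<dots> = Ih (\<lambda>t. c a * f a t) + Ih (\<lambda>t. \<Sum>i\<in>A. c i * f i t)" by (rule Ih_add[OF fa fA])
  also have "\<dots> = c a * Ih (f a) + (\<Sum>i\<in>A. c i * Ih (f i))"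
    using insert Ih_cmult by simp
  finally show ?case using insert by simp
qed

lemma supn_zero_on:
  fixes h :: "real \<Rightarrow> real"
  assumes "Ck_on m II h" "j \<le> m" "\<And>t. t \<in> II \<Longrightarrow> nderiv j II h t = 0"
  shows "supn j II h II = 0"
proof (rule antisym)
  show "supn j II h II \<le> 0" by (rule supn_least) (use assms in auto)
  show "0 \<le> supn j II h II" by (rule supn_nonneg[OF assms(1,2)]) auto
qed

lemma Ih_local:
  assumes f: "Ck_on kI II f" and g: "Ck_on kI II g" and eq: "\<And>t. t \<in> II \<Longrightarrow> f t = g t"
  shows "Ih f = Ih g"
proof -
  obtain C0 where C0: "\<forall>g. Ck_on kI II g \<longrightarrow> \<bar>Ih g\<bar> \<le> C0 * (\<Sum>j\<le>kI. supn j II g II)"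
    using A2s by blast
  have D: "Ck_on kI II (\<lambda>t. f t - g t) \<and> (\<forall>j\<le>kI. \<forall>t\<in>II. nderiv j II (\<lambda>t. f t - g t) t = nderiv j II f t - nderiv j II g t)"
    by (rule Ck_diff[OF m11 f g])
  have z: "supn j II (\<lambda>t. f t - g t) II = 0" if "j \<le> kI" for j
    by (rule supn_zero_on[OF conjunct1[OF D] that]) (use D that nderiv_cong[OF m11 eq] in auto)
  have "\<bar>Ih (\<lambda>t. f t - g t)\<bar> \<le> C0 * (\<Sum>j\<le>kI. supn j II (\<lambda>t. f t - g t) II)" using C0 D by blast
  also have "(\<Sum>j\<le>kI. supn j II (\<lambda>t. f t - g t) II) = 0" using z by simp
  finally have "\<bar>Ih (\<lambda>t. f t - g t)\<bar> \<le> 0" by simp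
  then have "Ih f - Ih g = 0" using Ih_diff[OF f g] by simp
  then show ?thesis by simp
qed

lemma Iop_add: "Ck_on kIop II f \<Longrightarrow> Ck_on kIop II g \<Longrightarrow> t \<in> II \<Longrightarrow> Iop (\<lambda>s. f s + g s) t = Iop f t + Iop g t"
  using lin_Iop by blast

lemma Iop_cmult: "Ck_on kIop II f \<Longrightarrow> t \<in> II \<Longrightarrow> Iop (\<lambda>s. c * f s) t = c * Iop f t"
  using lin_Iop by blast

lemma Iop_diff: "Ck_on kIop II f \<Longrightarrow> Ck_on kIop II g \<Longrightarrow> t \<in> II \<Longrightarrow> Iop (\<lambda>s. f s - g s) t = Iop f t - Iop g t"
proof -
  assume f: "Ck_on kIop II f" and g: "Ck_on kIop II g" and t: "t \<in> II"
  have g': "Ck_on kIop II (\<lambda>t. (-1) * g t)" using Ck_mult_const[OF m11 g] by blast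
  have "Iop (\<lambda>s. f s + (-1) * g s) t = Iop f t + Iop (\<lambda>s. (-1) * g s) t" by (rule Iop_add[OF f g' t])
  also have "Iop (\<lambda>s. (-1) * g s) t = - Iop g t" using Iop_cmult[OF g t, of "-1"] by simp
  finally show ?thesis by simp
qed

lemma Iop_local:
  assumes f: "Ck_on kIop II f" and g: "Ck_on kIop II g" and eq: "\<And>t. t \<in> II \<Longrightarrow> f t = g t"
    and t: "t \<in> II"
  shows "Iop f t = Iop g t"
proof -
  obtain C1 where C1: "\<forall>m\<le>kI. \<forall>g. Ck_on (max kIop m) II g \<longrightarrow>
        supn m II (Iop g) II \<le> C1 * (\<Sum>j\<le>max kIop m. supn j II g II)"
    using A3s by blast
  have D: "Ck_on kIop II (\<lambda>t. f t - g t) \<and> (\<forall>j\<le>kIop. \<forall>t\<in>II. nderiv j II (\<lambda>t. f t - g t) t = nderiv j II f t - nderiv j II g t)"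
    by (rule Ck_diff[OF m11 f g])
  have z: "supn j II (\<lambda>t. f t - g t) II = 0" if "j \<le> kIop" for j
    by (rule supn_zero_on[OF conjunct1[OF D] that]) (use D that nderiv_cong[OF m11 eq] in auto)
  have cI: "Ck_on 0 II (Iop (\<lambda>t. f t - g t))" using reg_Iop[of 0] D by simp
  have "supn 0 II (Iop (\<lambda>t. f t - g t)) II \<le> 0" using C1[rule_format, of 0 "\<lambda>t. f t - g t"] D z by simp
  moreover have "norm (nderiv 0 II (Iop (\<lambda>t. f t - g t)) t) \<le> supn 0 II (Iop (\<lambda>t. f t - g t)) II"
    by (rule supn_upper[OF cI]) (use t in auto)
  ultimately have "Iop (\<lambda>t. f t - g t) t = 0" by simp
  then show ?thesis using Iop_diff[OF f g t] by simp
qed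

end


lemma Ck_mult:
  fixes f g :: "real \<Rightarrow> real"
  assumes xy: "x < y" and f: "Ck_on m {x..y} f" and g: "Ck_on m {x..y} g"
  shows "Ck_on m {x..y} (\<lambda>t. f t * g t)"
  using Ck_prod[OF xy f g] by simp

lemma Ck_pow: "x < y \<Longrightarrow> Ck_on m {x..y} (\<lambda>s::real. s ^ i)"
proof -
  assume xy: "x < y"
  have "(\<lambda>s::real. s ^ i) = poly (monom 1 i)" by (rule ext) (simp add: poly_monom)
  then show ?thesis using Ck_poly_all[OF xy] by simp
qed

lemma pderiv_pow_monom_bound:
  fixes t :: real
  assumes "\<bar>t\<bar> \<le> 1"
  shows "\<bar>poly ((pderiv ^^ l) (monom 1 i)) t\<bar> \<le> real i ^ l"
proof (induction l arbitrary: i)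
  case 0
  have "\<bar>t ^ i\<bar> \<le> 1" using assms by (simp add: power_abs power_le_one)
  then show ?case by (simp add: poly_monom)
next
  case (Suc l)
  have e: "(pderiv ^^ l) (smult c p) = smult c ((pderiv ^^ l) p)" for c and p :: "real poly"
    by (induction l) (auto simp: pderiv_smult)
  have "(pderiv ^^ Suc l) (monom 1 i) = (pderiv ^^ l) (pderiv (monom 1 i))"
    by (simp only: funpow_Suc_right o_apply)
  also have "pderiv (monom (1::real) i) = smult (real i) (monom 1 (i - 1))"
    by (simp add: pderiv_monom smult_monom)
  finally have "(pderiv ^^ Suc l) (monom 1 i) = smult (real i) ((pderiv ^^ l) (monom 1 (i - 1)))"
    by (simp add: e)
  then have "\<bar>poly ((pderiv ^^ Suc l) (monom 1 i)) t\<bar> = real i * \<bar>poly ((pderiv ^^ l) (monom 1 (i - 1))) t\<bar>"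
    by (simp add: abs_mult)
  also have "\<dots> \<le> real i * real (i - 1) ^ l" using Suc.IH[of "i - 1"] by (simp add: mult_left_mono)
  also have "\<dots> \<le> real i * real i ^ l" by (intro mult_left_mono power_mono) auto
  finally show ?case by simp
qed

context refset
begin

definition "NA = (if k = 0 then 0 else (k - 1) div 2 + 1)"
definition "NB = k div 2"
definition "NC = r - k + 1"
definition "NN = NA + NB + NC"
definition "M0 = max (k div 2) (max kI kIop + 1)"

definition datA :: "(real \<Rightarrow> real) \<Rightarrow> nat \<Rightarrow> real" where
  "datA f j = (if j < NA then nderiv j II f (-1) else if j < NA + NB then nderiv (j - NA + 1) II f 1
     else Ih (\<lambda>s. s ^ (j - NA - NB) * nderiv 1 II f s) + (if k = 0 then f (-1) * (-1) ^ (j - NA - NB) else 0))"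

definition datB :: "(real \<Rightarrow> real) \<Rightarrow> nat \<Rightarrow> real" where
  "datB f j = (if j < NA then nderiv j II f (-1) else if j < NA + NB then nderiv (j - NA + 1) II f 1
     else Ih (\<lambda>s. s ^ (j - NA - NB) * Iop (nderiv 1 II f) s) + (if k = 0 then f (-1) * (-1) ^ (j - NA - NB) else 0))"

lemma idxA: "j < NA \<Longrightarrow> j \<le> k div 2"
  unfolding NA_def by (cases "k = 0") auto

lemma idxB: "\<not> j < NA \<Longrightarrow> j < NA + NB \<Longrightarrow> j - NA + 1 \<le> k div 2"
  unfolding NA_def NB_def by (cases "k = 0") auto

lemma M0_le: "M0 \<le> M \<Longrightarrow> k div 2 \<le> M \<and> kI + 1 \<le> M \<and> kIop + 1 \<le> M"
  unfolding M0_def by auto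

lemma ck_C:
  assumes f: "Ck_on M II f" and M: "kI + 1 \<le> M"
  shows "Ck_on kI II (\<lambda>s. s ^ m * nderiv 1 II f s)"
proof -
  have "Ck_on (Suc (M - 1)) II f" using f M by simp
  then have "Ck_on (M - 1) II (nderiv 1 II f)" by (rule Ck_shift)
  then have "Ck_on kI II (nderiv 1 II f)" by (rule Ck_on_mono) (use M in simp)
  then show ?thesis by (rule Ck_mult[OF m11 Ck_pow[OF m11]])
qed

lemma datA_sum:
  assumes fin: "finite A" and f: "\<And>i. i \<in> A \<Longrightarrow> Ck_on M II (f i)" and M: "M0 \<le> M"
  shows "datA (\<lambda>t. \<Sum>i\<in>A. c i * f i t) j = (\<Sum>i\<in>A. c i * datA (f i) j)"
proof -
  let ?F = "\<lambda>t. \<Sum>i\<in>A. c i * f i t"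
  have cf: "\<And>i. i \<in> A \<Longrightarrow> Ck_on M II (\<lambda>t. c i * f i t) \<and> (\<forall>j\<le>M. \<forall>t\<in>II. nderiv j II (\<lambda>t. c i * f i t) t = c i * nderiv j II (f i) t)"
    using Ck_mult_const[OF m11 f] by blast
  have SF: "Ck_on M II ?F \<and> (\<forall>j\<le>M. \<forall>t\<in>II. nderiv j II ?F t = (\<Sum>i\<in>A. nderiv j II (\<lambda>t. c i * f i t) t))"
    by (rule Ck_sum[OF m11 fin]) (use cf in blast)
  have nd: "nderiv j' II ?F t = (\<Sum>i\<in>A. c i * nderiv j' II (f i) t)" if "j' \<le> M" "t \<in> II" for j' t
    using SF cf that by (auto intro!: sum.cong)
  have Ms: "k div 2 \<le> M" "kI + 1 \<le> M" "kIop + 1 \<le> M" using M0_le[OF M] by auto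
  show ?thesis
  proof (cases "j < NA")
    case True
    then show ?thesis using nd[of j "-1"] idxA[OF True] Ms by (simp add: datA_def sum_distrib_left)
  next
    case nA: False
    show ?thesis
    proof (cases "j < NA + NB")
      case True
      then show ?thesis using nd[of "j - NA + 1" 1] idxB[OF nA True] Ms nA by (simp add: datA_def)
    next
      case nB: False
      let ?m = "j - NA - NB"
      have c1: "Ck_on kI II (\<lambda>s. s ^ ?m * nderiv 1 II ?F s)" by (rule ck_C[OF conjunct1[OF SF] Ms(2)])
      have c2: "\<And>i. i \<in> A \<Longrightarrow> Ck_on kI II (\<lambda>s. s ^ ?m * nderiv 1 II (f i) s)"
        using ck_C[OF f Ms(2)] by blast
      have c3: "Ck_on kI II (\<lambda>s. \<Sum>i\<in>A. c i * (s ^ ?m * nderiv 1 II (f i) s))"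
        using Ck_sum[OF m11 fin, where f="\<lambda>i s. c i * (s ^ ?m * nderiv 1 II (f i) s)" and m=kI]
          Ck_mult_const[OF m11 c2] by blast
      have "Ih (\<lambda>s. s ^ ?m * nderiv 1 II ?F s) = Ih (\<lambda>s. \<Sum>i\<in>A. c i * (s ^ ?m * nderiv 1 II (f i) s))"
        by (rule Ih_local[OF c1 c3]) (use nd[of 1] Ms in \<open>auto simp: sum_distrib_left algebra_simps\<close>)
      also have "\<dots> = (\<Sum>i\<in>A. c i * Ih (\<lambda>s. s ^ ?m * nderiv 1 II (f i) s))"
        by (rule Ih_sum[OF fin c2])
      finally have e1: "Ih (\<lambda>s. s ^ ?m * nderiv 1 II ?F s) = \<dots>" .
      have e2: "?F (-1) * (-1) ^ ?m = (\<Sum>i\<in>A. c i * (f i (-1) * (-1) ^ ?m))"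
        by (simp add: sum_distrib_right algebra_simps)
      have dF: "datA ?F j = Ih (\<lambda>s. s ^ ?m * nderiv 1 II ?F s) + (if k = 0 then ?F (-1) * (-1) ^ ?m else 0)"
        unfolding datA_def using nA nB by (simp only: if_False)
      have df: "datA (f i) j = Ih (\<lambda>s. s ^ ?m * nderiv 1 II (f i) s) + (if k = 0 then f i (-1) * (-1) ^ ?m else 0)" for i
        unfolding datA_def using nA nB by (simp only: if_False)
      show ?thesis
      proof (cases "k = 0")
        case True
        show ?thesis unfolding dF df e1 e2 using True by (simp add: sum.distrib[symmetric] distrib_left)
      next
        case False
        show ?thesis unfolding dF df e1 using False by simp
      qed
    qed
  qed
qed

end


lemma nd_poly: "t \<in> {x..y} \<Longrightarrow> x < y \<Longrightarrow> nderiv i {x..y} (poly q) t = poly ((pderiv ^^ i) q) t"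
  using Ck_poly[of x y i q] by auto

lemma poly_as_sum: "degree (f::real poly) < n \<Longrightarrow> poly f s = (\<Sum>m<n. coeff f m * s ^ m)"
  unfolding poly_altdef by (rule sum.mono_neutral_left) (auto simp: coeff_eq_0)

context refset
begin

lemma datA_poly:
  "datA (poly q) j = (if j < NA then poly ((pderiv ^^ j) q) (-1) else if j < NA + NB then poly ((pderiv ^^ (j - NA + 1)) q) 1
     else Ih (\<lambda>s. s ^ (j - NA - NB) * poly (pderiv q) s) + (if k = 0 then poly q (-1) * (-1) ^ (j - NA - NB) else 0))"
proof -
  have c1: "Ck_on kI II (\<lambda>s. s ^ m * nderiv 1 II (poly q) s)" for m
    by (rule ck_C[OF Ck_poly_all[OF m11, of "Suc kI"]]) simp
  have c2: "Ck_on kI II (\<lambda>s. s ^ m * poly (pderiv q) s)" for m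
    by (rule Ck_mult[OF m11 Ck_pow[OF m11] Ck_poly_all[OF m11]])
  have e: "Ih (\<lambda>s. s ^ m * nderiv 1 II (poly q) s) = Ih (\<lambda>s. s ^ m * poly (pderiv q) s)" for m
    by (rule Ih_local[OF c1 c2]) (simp add: nd_poly)
  show ?thesis unfolding datA_def e by (simp add: nd_poly)
qed

lemma datA_test:
  assumes z: "\<forall>j<NN. datA (poly q) j = 0" and df: "degree f \<le> r - k"
  shows "Ih (\<lambda>s. poly f s * poly (pderiv q) s) + (if k = 0 then poly q (-1) * poly f (-1) else 0) = 0"
proof -
  have dfn: "degree f < NC" using df unfolding NC_def by simp
  have zm: "Ih (\<lambda>s. s ^ m * poly (pderiv q) s) + (if k = 0 then poly q (-1) * (-1) ^ m else 0) = 0" if "m < NC" for m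
  proof -
    have e: "NA + NB + m - NA - NB = m" by simp
    show ?thesis using z[rule_format, of "NA + NB + m"] that unfolding NN_def datA_poly e by simp
  qed
  have cm: "\<And>m. m \<in> {..<NC} \<Longrightarrow> Ck_on kI II (\<lambda>s. s ^ m * poly (pderiv q) s)"
    by (rule Ck_mult[OF m11 Ck_pow[OF m11] Ck_poly_all[OF m11]])
  have "(\<lambda>s. poly f s * poly (pderiv q) s) = (\<lambda>s. \<Sum>m<NC. coeff f m * (s ^ m * poly (pderiv q) s))"
    by (rule ext) (simp only: poly_as_sum[OF dfn] sum_distrib_right mult.assoc)
  then have e1: "Ih (\<lambda>s. poly f s * poly (pderiv q) s) = (\<Sum>m<NC. coeff f m * Ih (\<lambda>s. s ^ m * poly (pderiv q) s))"
    using Ih_sum[where A="{..<NC}" and f="\<lambda>m s. s ^ m * poly (pderiv q) s" and c="coeff f", OF _ cm] by simp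
  have e2: "poly q (-1) * poly f (-1) = (\<Sum>m<NC. coeff f m * (poly q (-1) * (-1) ^ m))"
    by (simp add: poly_as_sum[OF dfn] sum_distrib_left algebra_simps)
  have "Ih (\<lambda>s. poly f s * poly (pderiv q) s) + (if k = 0 then poly q (-1) * poly f (-1) else 0) =
     (\<Sum>m<NC. coeff f m * (Ih (\<lambda>s. s ^ m * poly (pderiv q) s) + (if k = 0 then poly q (-1) * (-1) ^ m else 0)))"
    by (cases "k = 0") (simp_all add: e1 e2 sum.distrib distrib_left)
  also have "\<dots> = 0" using zm by simp
  finally show ?thesis .
qed

lemma pderiv_deg: "degree q \<le> r \<Longrightarrow> poly (pderiv q) \<in> Pdeg (int r - 1)"
proof -
  assume d: "degree q \<le> r"
  show ?thesis
  proof (cases "r = 0")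
    case True
    then have "degree q = 0" using d by simp
    then have "pderiv q = 0" by (simp add: pderiv_eq_0_iff)
    then have "poly (pderiv q) = (\<lambda>t. 0)" by (simp add: fun_eq_iff)
    then show ?thesis using pdeg_zero True by simp
  next
    case False
    then show ?thesis using d by (intro pdeg_poly) (simp add: degree_pderiv)
  qed
qed

lemma inj_datA:
  assumes d: "degree q \<le> r" and z: "\<forall>j<NN. datA (poly q) j = 0"
  shows "q = 0"
proof (cases "k = 0")
  case True
  have NAB: "NA = 0" "NB = 0" unfolding NA_def NB_def using True by auto
  have psi: "poly (pderiv q) \<in> Pdeg (int r - int (max 1 k))" using pderiv_deg[OF d] True by simp
  have "poly (pderiv q) = (\<lambda>_. 0)"
  proof (rule A1[OF psi], rule ballI)
    fix \<phi> assume "\<phi> \<in> Pdeg (int r - int (max 1 k))"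
    then obtain f where \<phi>: "\<phi> = poly f" and f1: "int r - 1 < 0 \<Longrightarrow> f = 0" and f2: "int r - 1 \<ge> 0 \<Longrightarrow> int (degree f) \<le> int r - 1"
      using True by (auto elim: pdeg_elim)
    define g where "g = [:1, 1:] * f"
    have dg: "degree g \<le> r - k"
    proof (cases "f = 0")
      case True then show ?thesis by (simp add: g_def)
    next
      case False
      then have "int r - 1 \<ge> 0" using f1 by linarith
      then have "degree f + 1 \<le> r" using f2 by linarith
      have "degree g \<le> degree [:1, 1::real:] + degree f" unfolding g_def by (rule degree_mult_le)
      then show ?thesis using \<open>degree f + 1 \<le> r\<close> \<open>k = 0\<close> by simp
    qed
    have t: "Ih (\<lambda>s. poly g s * poly (pderiv q) s) + (if k = 0 then poly q (-1) * poly g (-1) else 0) = 0"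
      by (rule datA_test[OF z dg])
    have "(\<lambda>t. (1 - t) ^ (k div 2) * (1 + t) ^ nat \<bar>(int k - 1) div 2\<bar> * poly (pderiv q) t * \<phi> t) =
          (\<lambda>s. poly g s * poly (pderiv q) s)"
      using True by (auto simp: \<phi> g_def algebra_simps)
    then show "Ih (\<lambda>t. (1 - t) ^ (k div 2) * (1 + t) ^ nat \<bar>(int k - 1) div 2\<bar> * poly (pderiv q) t * \<phi> t) = 0"
      using t True by (simp add: g_def)
  qed
  then have "\<forall>x. poly (pderiv q) x = 0" by (simp add: fun_eq_iff)
  then have "pderiv q = 0" using poly_all_0_iff_0 by blast
  then obtain h where q: "q = [:h:]" using pderiv_iszero by blast
  have "datA (poly q) 0 = 0" using z unfolding NN_def NC_def by simp
  then have "Ih (\<lambda>s. s ^ 0 * poly (pderiv q) s) + h = 0" unfolding datA_poly using NAB True q by simp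
  moreover have "(\<lambda>s. s ^ 0 * poly (pderiv q) s) = (\<lambda>s. 0)" using \<open>pderiv q = 0\<close> by simp
  ultimately have "h = 0" using Ih_zero by simp
  then show ?thesis using q by simp
next
  case False
  have NA: "NA = (k - 1) div 2 + 1" unfolding NA_def using False by simp
  define \<alpha> where "\<alpha> = k div 2"
  define \<beta> where "\<beta> = (k - 1) div 2"
  have ab: "\<alpha> + \<beta> = k - 1" unfolding \<alpha>_def \<beta>_def using False by linarith
  have zA: "poly ((pderiv ^^ j) q) (-1) = 0" if "j < NA" for j
    using z[rule_format, of j] that unfolding NN_def datA_poly by simp
  have zB: "poly ((pderiv ^^ (j - NA + 1)) q) 1 = 0" if "NA \<le> j" "j < NA + NB" for j
    using z[rule_format, of j] that unfolding NN_def datA_poly by simp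
  have c1: "\<forall>i<\<alpha>. poly ((pderiv ^^ i) (pderiv q)) 1 = 0"
  proof safe
    fix i assume "i < \<alpha>"
    then have "poly ((pderiv ^^ (NA + i - NA + 1)) q) 1 = 0" by (intro zB) (auto simp: NB_def \<alpha>_def)
    then show "poly ((pderiv ^^ i) (pderiv q)) 1 = 0" by (simp add: funpow_Suc_right del: funpow.simps)
  qed
  have c2: "\<forall>i<\<beta>. poly ((pderiv ^^ i) (pderiv q)) (-1) = 0"
  proof safe
    fix i assume "i < \<beta>"
    then have "poly ((pderiv ^^ (Suc i)) q) (-1) = 0" by (intro zA) (auto simp: NA \<beta>_def)
    then show "poly ((pderiv ^^ i) (pderiv q)) (-1) = 0" by (simp add: funpow_Suc_right del: funpow.simps)
  qed
  obtain \<psi>0 where fac: "pderiv q = [:-1, 1:] ^ \<alpha> * [:1, 1:] ^ \<beta> * \<psi>0" by (rule factor_two[OF c1 c2])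
  define \<psi> where "\<psi> = smult ((-1) ^ \<alpha>) \<psi>0"
  have pe: "poly (pderiv q) t = (1 - t) ^ \<alpha> * (1 + t) ^ \<beta> * poly \<psi> t" for t
  proof -
    have m1: "(-1) * (1 - t) = t - 1" by simp
    have "(t - 1) ^ \<alpha> = ((-1) * (1 - t)) ^ \<alpha>" by (simp only: m1)
    also have "\<dots> = (-1) ^ \<alpha> * (1 - t) ^ \<alpha>" by (rule power_mult_distrib)
    finally have s1: "(t - 1) ^ \<alpha> = (-1) ^ \<alpha> * (1 - t) ^ \<alpha>" .
    have s2: "poly (pderiv q) t = (t - 1) ^ \<alpha> * (1 + t) ^ \<beta> * poly \<psi>0 t"
      unfolding fac by (simp add: poly_power)
    have s3: "poly \<psi> t = (-1) ^ \<alpha> * poly \<psi>0 t" unfolding \<psi>_def by simp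
    show ?thesis unfolding s2 s3 s1 by (simp only: mult_ac)
  qed
  have dpsi: "poly \<psi> \<in> Pdeg (int r - int (max 1 k))"
  proof (cases "\<psi>0 = 0")
    case True
    have "poly \<psi> = (\<lambda>t. 0)" using True by (simp add: \<psi>_def fun_eq_iff)
    then show ?thesis using pdeg_zero by simp
  next
    case nz: False
    have A0: "[:-1, 1::real:] ^ \<alpha> \<noteq> 0" and B0: "[:1, 1::real:] ^ \<beta> \<noteq> 0" by simp_all
    have AB0: "[:-1, 1::real:] ^ \<alpha> * [:1, 1::real:] ^ \<beta> \<noteq> 0" using A0 B0 by simp
    have dA: "degree ([:-1, 1::real:] ^ \<alpha>) = \<alpha>" by (rule degree_linear_power)
    have dB: "degree ([:1, 1::real:] ^ \<beta>) = \<beta>" by (rule degree_linear_power)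
    have "degree (pderiv q) = degree ([:-1, 1::real:] ^ \<alpha> * [:1, 1::real:] ^ \<beta>) + degree \<psi>0"
      unfolding fac by (rule degree_mult_eq[OF AB0 nz])
    also have "degree ([:-1, 1::real:] ^ \<alpha> * [:1, 1::real:] ^ \<beta>) = \<alpha> + \<beta>"
      using degree_mult_eq[OF A0 B0] dA dB by simp
    finally have "degree (pderiv q) = \<alpha> + \<beta> + degree \<psi>0" .
    moreover have "degree (pderiv q) \<le> r - 1" using d by (simp add: degree_pderiv)
    ultimately have "degree \<psi>0 \<le> r - k" using ab False kr by linarith
    moreover have "degree \<psi> \<le> degree \<psi>0" unfolding \<psi>_def by (rule degree_smult_le)
    ultimately show ?thesis using False kr by (intro pdeg_poly) auto
  qed
  have "poly \<psi> = (\<lambda>_. 0)"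
  proof (rule A1[OF dpsi], rule ballI)
    fix \<phi> assume "\<phi> \<in> Pdeg (int r - int (max 1 k))"
    then obtain f where \<phi>: "\<phi> = poly f" and f2: "int r - int k \<ge> 0 \<Longrightarrow> int (degree f) \<le> int r - int k"
      using False by (auto elim: pdeg_elim)
    have df: "degree f \<le> r - k" using f2 kr by linarith
    have t: "Ih (\<lambda>s. poly f s * poly (pderiv q) s) + (if k = 0 then poly q (-1) * poly f (-1) else 0) = 0"
      by (rule datA_test[OF z df])
    have ex: "nat \<bar>(int k - 1) div 2\<bar> = \<beta>"
    proof -
      have e: "int k - 1 = int (k - 1)" using False by simp
      have "(int k - 1) div 2 = int ((k - 1) div 2)" unfolding e zdiv_int by simp
      then show ?thesis unfolding \<beta>_def by simp
    qed
    have "(\<lambda>t. (1 - t) ^ (k div 2) * (1 + t) ^ nat \<bar>(int k - 1) div 2\<bar> * poly \<psi> t * \<phi> t) =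
          (\<lambda>s. poly f s * poly (pderiv q) s)"
      unfolding ex \<alpha>_def[symmetric] pe \<phi> by (rule ext) (simp only: mult_ac)
    then show "Ih (\<lambda>t. (1 - t) ^ (k div 2) * (1 + t) ^ nat \<bar>(int k - 1) div 2\<bar> * poly \<psi> t * \<phi> t) = 0"
      using t False by simp
  qed
  then have "poly (pderiv q) = (\<lambda>_. 0)" using pe by auto
  then have "\<forall>x. poly (pderiv q) x = 0" by (simp add: fun_eq_iff)
  then have "pderiv q = 0" using poly_all_0_iff_0 by blast
  then obtain h where q: "q = [:h:]" using pderiv_iszero by blast
  have "poly q (-1) = 0" using zA[of 0] NA by simp
  then show ?thesis using q by simp
qed

end


lemma pd_monom:
  "(pderiv ^^ j) (monom (a::real) i) = (if j \<le> i then monom (a * fact i / fact (i - j)) (i - j) else 0)"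
proof (induction j)
  case 0 then show ?case by simp
next
  case (Suc j)
  show ?case
  proof (cases "Suc j \<le> i")
    case True
    then have ji: "j \<le> i" by simp
    have e: "i - j = Suc (i - Suc j)" using True by simp
    have f: "fact (i - j) = real (i - j) * fact (i - Suc j)"
      unfolding e fact_Suc by simp
    have "(pderiv ^^ Suc j) (monom a i) = pderiv (monom (a * fact i / fact (i - j)) (i - j))"
      using Suc ji by simp
    also have "\<dots> = monom (real (i - j) * (a * fact i / fact (i - j))) (i - j - 1)" by (rule pderiv_monom)
    also have "real (i - j) * (a * fact i / fact (i - j)) = a * fact i / fact (i - Suc j)"
      using True by (simp add: f field_simps)
    finally show ?thesis using True by simp
  next
    case False
    show ?thesis
    proof (cases "j \<le> i")
      case True
      then have "i = j" using False by simp
      then show ?thesis using Suc by (simp add: pderiv_monom)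
    next
      case False
      then show ?thesis using Suc by simp
    qed
  qed
qed

lemma pd_monom0: "poly ((pderiv ^^ j) (monom (1::real) i)) 0 = (if i = j then fact i else 0)"
  by (auto simp: pd_monom poly_monom)

lemma pd_monom_high: "i < j \<Longrightarrow> poly ((pderiv ^^ j) (monom (1::real) i)) t = 0"
  by (simp add: pd_monom)

lemma mm11: "(-1::real) < 1" by simp

lemma pow_poly: "(\<lambda>s::real. s ^ i) = poly (monom 1 i)"
  by (rule ext) (simp add: poly_monom)

lemma nd_psum:
  assumes t: "t \<in> II"
  shows "nderiv l II (\<lambda>t. \<Sum>i<n. c i * t ^ i) t = (\<Sum>i<n. c i * poly ((pderiv ^^ l) (monom 1 i)) t)"
proof -
  have ci: "Ck_on l II (\<lambda>t. c i * t ^ i) \<and> (\<forall>j\<le>l. \<forall>t\<in>II. nderiv j II (\<lambda>t. c i * t ^ i) t = c i * nderiv j II (\<lambda>t. t ^ i) t)" for i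
    by (rule Ck_mult_const[OF mm11 Ck_pow[OF mm11]])
  have S: "Ck_on l II (\<lambda>t. \<Sum>i<n. c i * t ^ i) \<and> (\<forall>j\<le>l. \<forall>t\<in>II. nderiv j II (\<lambda>t. \<Sum>i<n. c i * t ^ i) t = (\<Sum>i<n. nderiv j II (\<lambda>t. c i * t ^ i) t))"
    by (rule Ck_sum[OF mm11]) (use ci in auto)
  show ?thesis using S ci t by (auto simp: pow_poly nd_poly intro!: sum.cong)
qed

lemma psum_deriv_bound:
  assumes t: "t \<in> II" and n: "n \<le> Suc r"
  shows "\<bar>nderiv l II (\<lambda>t. \<Sum>i<n. c i * t ^ i) t\<bar> \<le> real r ^ l * (\<Sum>i<n. \<bar>c i\<bar>)"
proof -
  have tt: "\<bar>t\<bar> \<le> 1" using t by auto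
  have "\<bar>nderiv l II (\<lambda>t. \<Sum>i<n. c i * t ^ i) t\<bar> \<le> (\<Sum>i<n. \<bar>c i\<bar> * \<bar>poly ((pderiv ^^ l) (monom 1 i)) t\<bar>)"
    unfolding nd_psum[OF t] by (rule order_trans[OF sum_abs]) (simp add: abs_mult)
  also have "\<dots> \<le> (\<Sum>i<n. \<bar>c i\<bar> * real r ^ l)"
  proof (intro sum_mono mult_left_mono)
    fix i assume "i \<in> {..<n}"
    then have "i \<le> r" using n by auto
    then show "\<bar>poly ((pderiv ^^ l) (monom 1 i)) t\<bar> \<le> real r ^ l"
      using pderiv_pow_monom_bound[OF tt, of l i] by (meson of_nat_0_le_iff of_nat_le_iff order_trans power_mono)
  qed simp
  also have "\<dots> = real r ^ l * (\<Sum>i<n. \<bar>c i\<bar>)"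
    by (subst sum_distrib_right[symmetric]) (rule mult.commute)
  finally show ?thesis .
qed

lemma mv_bound:
  fixes g :: "real \<Rightarrow> real"
  assumes g: "Ck_on m II g" and j: "j < m" and z: "nderiv j II g 0 = 0" and t: "t \<in> II"
  shows "\<bar>nderiv j II g t\<bar> \<le> supn (Suc j) II g II"
proof -
  have B0: "0 \<le> supn (Suc j) II g II" by (rule supn_nonneg[OF g]) (use j in auto)
  have "norm (nderiv j II g t - nderiv j II g 0) \<le> supn (Suc j) II g II * norm (t - 0)"
  proof (rule field_differentiable_bound[where S=II])
    show "convex II" by simp
    show "\<And>z. z \<in> II \<Longrightarrow> (nderiv j II g has_field_derivative nderiv (Suc j) II g z) (at z within II)"
      using Ck_on_D[OF g j] by (simp add: has_real_derivative_iff_has_vector_derivative)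
    show "\<And>z. z \<in> II \<Longrightarrow> norm (nderiv (Suc j) II g z) \<le> supn (Suc j) II g II"
      by (rule supn_upper[OF g]) (use j in auto)
  qed (use t in auto)
  also have "\<dots> \<le> supn (Suc j) II g II * 1" using t B0 by (intro mult_left_mono) auto
  finally show ?thesis using z by simp
qed

context refset
begin

lemma FD_app:
  "\<exists>K\<ge>0. \<forall>c. (\<Sum>i<Suc r. \<bar>c i\<bar>) \<le> K * (\<Sum>j<NN. \<bar>datA (\<lambda>t. \<Sum>i<Suc r. c i * t ^ i) j\<bar>)"
proof -
  define a where "a = (\<lambda>j i. datA (\<lambda>t. t ^ i) j)"
  have lin: "datA (\<lambda>t. \<Sum>i<Suc r. c i * t ^ i) j = (\<Sum>i<Suc r. a j i * c i)" for c j
    unfolding a_def by (subst datA_sum[where M=M0]) (auto simp: Ck_pow mult.commute)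
  have inj: "\<forall>i<Suc r. c i = 0" if h: "\<forall>j<NN. (\<Sum>i<Suc r. a j i * c i) = 0" for c
  proof -
    define q where "q = (\<Sum>i<Suc r. monom (c i) i)"
    have dq: "degree q \<le> r"
      by (rule degree_le) (auto simp: q_def coeff_sum intro!: sum.neutral)
    have "poly q = (\<lambda>t. \<Sum>i<Suc r. c i * t ^ i)" unfolding q_def by (rule poly_sum_monom[symmetric])
    then have "\<forall>j<NN. datA (poly q) j = 0" using h lin by simp
    then have "q = 0" by (rule inj_datA[OF dq])
    then have z: "coeff q i = 0" for i by simp
    have cq: "coeff q i = c i" if "i < Suc r" for i
      unfolding q_def coeff_sum coeff_monom using that by (simp add: sum.delta)
    show ?thesis using z cq by simp
  qed
  obtain K where "K \<ge> 0" "\<forall>c. (\<Sum>i<Suc r. \<bar>c i\<bar>) \<le> K * (\<Sum>j<NN. \<bar>\<Sum>i<Suc r. a j i * c i\<bar>)"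
    using FD_inj_bound[where N=NN and n="Suc r" and a=a] inj by blast
  then show ?thesis using lin by auto
qed

end


lemma locI_ref: "locI Ih (-1) 1 f = Ih f"
  unfolding locI_def Tmap_def by simp

lemma locOpS_ref: "locOpS Iop (-1) 1 \<phi> = Iop \<phi>"
  unfolding locOpS_def Tmap_def Tinv_def by (rule ext) simp

context refset
begin

lemma ck_shift1: "Ck_on M II f \<Longrightarrow> 1 \<le> M \<Longrightarrow> Ck_on (M - 1) II (nderiv 1 II f)"
  using Ck_shift[of "M - 1" II f] by simp

lemma ck_iop:
  assumes f: "Ck_on M II f" and M: "M0 \<le> M"
  shows "Ck_on (max kIop kI) II (nderiv 1 II f)" "Ck_on kIop II (nderiv 1 II f)"
    "Ck_on kI II (Iop (nderiv 1 II f))" "Ck_on kI II (\<lambda>s. s ^ m * Iop (nderiv 1 II f) s)"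
proof -
  have Ms: "kI + 1 \<le> M" "kIop + 1 \<le> M" using M0_le[OF M] by auto
  have c: "Ck_on (M - 1) II (nderiv 1 II f)" by (rule ck_shift1[OF f]) (use Ms in auto)
  show c1: "Ck_on (max kIop kI) II (nderiv 1 II f)" by (rule Ck_on_mono[OF c]) (use Ms in auto)
  show "Ck_on kIop II (nderiv 1 II f)" by (rule Ck_on_mono[OF c]) (use Ms in auto)
  show c3: "Ck_on kI II (Iop (nderiv 1 II f))" by (rule reg_Iop[OF c1])
  show "Ck_on kI II (\<lambda>s. s ^ m * Iop (nderiv 1 II f) s)" by (rule Ck_mult[OF m11 Ck_pow[OF m11] c3])
qed

lemma datB_poly:
  "datB (poly q) j = (if j < NA then poly ((pderiv ^^ j) q) (-1) else if j < NA + NB then poly ((pderiv ^^ (j - NA + 1)) q) 1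
     else Ih (\<lambda>s. s ^ (j - NA - NB) * Iop (poly (pderiv q)) s) + (if k = 0 then poly q (-1) * (-1) ^ (j - NA - NB) else 0))"
proof -
  have pq: "Ck_on M II (poly q)" for M by (rule Ck_poly_all[OF m11])
  have c1: "Ck_on kI II (\<lambda>s. s ^ m * Iop (nderiv 1 II (poly q)) s)" for m
    by (rule ck_iop(4)[OF pq[of M0]]) simp
  have cp: "Ck_on N II (poly (pderiv q))" for N by (rule Ck_poly_all[OF m11])
  have c2: "Ck_on kI II (\<lambda>s. s ^ m * Iop (poly (pderiv q)) s)" for m
    by (rule Ck_mult[OF m11 Ck_pow[OF m11] reg_Iop[OF cp]])
  have io: "Iop (nderiv 1 II (poly q)) s = Iop (poly (pderiv q)) s" if "s \<in> II" for s
    by (rule Iop_local[OF ck_iop(2)[OF pq[of M0]] cp _ that]) (auto simp: nd_poly)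
  have e: "Ih (\<lambda>s. s ^ m * Iop (nderiv 1 II (poly q)) s) = Ih (\<lambda>s. s ^ m * Iop (poly (pderiv q)) s)" for m
    by (rule Ih_local[OF c1 c2]) (use io in auto)
  show ?thesis unfolding datB_def e by (simp add: nd_poly)
qed

lemma pderiv_pdeg_n0:
  assumes "q = 0 \<or> degree q < n0"
  shows "poly (pderiv q) \<in> Pdeg (int n0 - 2)"
proof (cases "pderiv q = 0")
  case True
  then have "poly (pderiv q) = (\<lambda>t. 0)" by (simp add: fun_eq_iff)
  then show ?thesis using pdeg_zero by simp
next
  case False
  then have "q \<noteq> 0" by auto
  then have d: "degree q < n0" using assms by simp
  have "degree q \<noteq> 0" using False by (auto simp: pderiv_eq_0_iff)
  then show ?thesis using d by (intro pdeg_poly) (simp add: degree_pderiv)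
qed

lemma exact_AB:
  assumes ex: "exact_for Ih Iop (-1) 1 (int n0 - 2) (int r - int k)" and dq: "q = 0 \<or> degree q < n0"
    and j: "j < NN"
  shows "datA (poly q) j = datB (poly q) j"
proof -
  have key: "Ih (\<lambda>s. s ^ m * poly (pderiv q) s) = Ih (\<lambda>s. s ^ m * Iop (poly (pderiv q)) s)" if m: "m < NC" for m
  proof -
    have psi: "(\<lambda>s. s ^ m) \<in> Pdeg (int r - int k)"
      unfolding pow_poly by (rule pdeg_poly) (use m kr in \<open>auto simp: NC_def degree_monom_eq\<close>)
    have "\<forall>\<psi>\<in>Pdeg (int r - int k). locI Ih (-1) 1 (\<lambda>t. poly (pderiv q) t * \<psi> t) = locI Ih (-1) 1 (\<lambda>t. locOpS Iop (-1) 1 (poly (pderiv q)) t * \<psi> t)"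
      using ex pderiv_pdeg_n0[OF dq] unfolding exact_for_def by blast
    from this[rule_format, OF psi]
    have "locI Ih (-1) 1 (\<lambda>t. poly (pderiv q) t * t ^ m) = locI Ih (-1) 1 (\<lambda>t. locOpS Iop (-1) 1 (poly (pderiv q)) t * t ^ m)"
      by simp
    then have "Ih (\<lambda>t. poly (pderiv q) t * t ^ m) = Ih (\<lambda>t. Iop (poly (pderiv q)) t * t ^ m)"
      unfolding locI_ref locOpS_ref .
    then show ?thesis by (simp add: mult.commute)
  qed
  show ?thesis
  proof (cases "j < NA + NB")
    case True then show ?thesis unfolding datA_poly datB_poly by simp
  next
    case False
    then have "j - NA - NB < NC" using j unfolding NN_def by simp
    then show ?thesis using False unfolding datA_poly datB_poly by (simp add: key)
  qed
qed

end


context refset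
begin

lemma datB_diff:
  assumes f: "Ck_on M II f" and g: "Ck_on M II g" and M: "M0 \<le> M"
  shows "datB (\<lambda>t. f t - g t) j = datB f j - datB g j"
proof -
  let ?h = "\<lambda>t. f t - g t"
  have Ms: "k div 2 \<le> M" "kI + 1 \<le> M" "kIop + 1 \<le> M" using M0_le[OF M] by auto
  have D: "Ck_on M II ?h \<and> (\<forall>j\<le>M. \<forall>t\<in>II. nderiv j II ?h t = nderiv j II f t - nderiv j II g t)"
    by (rule Ck_diff[OF m11 f g])
  note h = conjunct1[OF D]
  show ?thesis
  proof (cases "j < NA")
    case True
    then show ?thesis using D idxA[OF True] Ms by (simp add: datB_def)
  next
    case nA: False
    show ?thesis
    proof (cases "j < NA + NB")
      case True
      then show ?thesis using D idxB[OF nA True] Ms nA by (simp add: datB_def)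
    next
      case nB: False
      let ?m = "j - NA - NB"
      let ?f1 = "nderiv 1 II f" and ?g1 = "nderiv 1 II g" and ?h1 = "nderiv 1 II ?h"
      have cf1: "Ck_on kIop II ?f1" by (rule ck_iop(2)[OF f M])
      have cg1: "Ck_on kIop II ?g1" by (rule ck_iop(2)[OF g M])
      have ch1: "Ck_on kIop II ?h1" by (rule ck_iop(2)[OF h M])
      have cd: "Ck_on kIop II (\<lambda>s. ?f1 s - ?g1 s)" using Ck_diff[OF m11 cf1 cg1] by blast
      have io: "Iop ?h1 s = Iop ?f1 s - Iop ?g1 s" if s: "s \<in> II" for s
      proof -
        have "Iop ?h1 s = Iop (\<lambda>s. ?f1 s - ?g1 s) s"
          by (rule Iop_local[OF ch1 cd _ s]) (use D Ms in auto)
        also have "\<dots> = Iop ?f1 s - Iop ?g1 s" by (rule Iop_diff[OF cf1 cg1 s])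
        finally show ?thesis .
      qed
      have c1: "Ck_on kI II (\<lambda>s. s ^ ?m * Iop ?h1 s)" by (rule ck_iop(4)[OF h M])
      have c2: "Ck_on kI II (\<lambda>s. s ^ ?m * Iop ?f1 s)" by (rule ck_iop(4)[OF f M])
      have c3: "Ck_on kI II (\<lambda>s. s ^ ?m * Iop ?g1 s)" by (rule ck_iop(4)[OF g M])
      have c23: "Ck_on kI II (\<lambda>s. s ^ ?m * Iop ?f1 s - s ^ ?m * Iop ?g1 s)" using Ck_diff[OF m11 c2 c3] by blast
      have "Ih (\<lambda>s. s ^ ?m * Iop ?h1 s) = Ih (\<lambda>s. s ^ ?m * Iop ?f1 s - s ^ ?m * Iop ?g1 s)"
      proof (rule Ih_local[OF c1 c23])
        fix s assume s: "s \<in> II"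
        show "s ^ ?m * Iop ?h1 s = s ^ ?m * Iop ?f1 s - s ^ ?m * Iop ?g1 s"
          unfolding io[OF s] by (rule right_diff_distrib)
      qed
      also have "\<dots> = Ih (\<lambda>s. s ^ ?m * Iop ?f1 s) - Ih (\<lambda>s. s ^ ?m * Iop ?g1 s)" by (rule Ih_diff[OF c2 c3])
      finally have e: "Ih (\<lambda>s. s ^ ?m * Iop ?h1 s) = \<dots>" .
      have dh: "datB ?h j = Ih (\<lambda>s. s ^ ?m * Iop ?h1 s) + (if k = 0 then ?h (-1) * (-1) ^ ?m else 0)"
        unfolding datB_def using nA nB by (simp only: if_False)
      have df: "datB f j = Ih (\<lambda>s. s ^ ?m * Iop ?f1 s) + (if k = 0 then f (-1) * (-1) ^ ?m else 0)"
        unfolding datB_def using nA nB by (simp only: if_False)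
      have dg: "datB g j = Ih (\<lambda>s. s ^ ?m * Iop ?g1 s) + (if k = 0 then g (-1) * (-1) ^ ?m else 0)"
        unfolding datB_def using nA nB by (simp only: if_False)
      show ?thesis unfolding dh df dg e by (simp add: algebra_simps)
    qed
  qed
qed

lemma sum_shift_le:
  fixes a :: "nat \<Rightarrow> real"
  assumes "\<And>i. i \<le> M \<Longrightarrow> a i \<ge> 0" "X + 1 \<le> M"
  shows "(\<Sum>j\<le>X. a (Suc j)) \<le> (\<Sum>j\<le>M. a j)"
proof -
  have "(\<Sum>j\<le>X. a (Suc j)) = (\<Sum>j\<in>Suc ` {..X}. a j)" by (simp add: sum.reindex)
  also have "\<dots> \<le> (\<Sum>j\<le>M. a j)" by (rule sum_mono2) (use assms in auto)
  finally show ?thesis .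
qed

lemma supn_shift: "supn j S (nderiv 1 S f) A = supn (Suc j) S f A"
  unfolding supn_def using nderiv_Suc0[of j S f] by simp

lemma datB_bound:
  assumes M: "M0 \<le> M"
  shows "\<exists>KB\<ge>0. \<forall>f. Ck_on M II f \<longrightarrow> (\<forall>j<NN. \<bar>datB f j\<bar> \<le> KB * (\<Sum>i\<le>M. supn i II f II))"
proof -
  obtain C0 where C0: "\<forall>g. Ck_on kI II g \<longrightarrow> \<bar>Ih g\<bar> \<le> C0 * (\<Sum>j\<le>kI. supn j II g II)" using A2s by blast
  obtain C1 where C1: "\<forall>m\<le>kI. \<forall>g. Ck_on (max kIop m) II g \<longrightarrow>
        supn m II (Iop g) II \<le> C1 * (\<Sum>j\<le>max kIop m. supn j II g II)" using A3s by blast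
  have Ms: "k div 2 \<le> M" "kI + 1 \<le> M" "kIop + 1 \<le> M" using M0_le[OF M] by auto
  define RR where "RR = (real r + 1) ^ kI"
  define K1 where "K1 = 2 ^ kI * ((real kI + 1) * RR) * ((real kI + 1) * \<bar>C1\<bar>)"
  define KB where "KB = 2 + \<bar>C0\<bar> * (real kI + 1) * K1"
  have RR0: "RR \<ge> 0" unfolding RR_def by simp
  have K10: "K1 \<ge> 0" unfolding K1_def using RR0 by simp
  have KB0: "KB \<ge> 0" unfolding KB_def using K10 by simp
  show ?thesis
  proof (intro exI[of _ KB] conjI KB0 allI impI)
    fix f :: "real \<Rightarrow> real" and j assume f: "Ck_on M II f" and jN: "j < NN"
    define SF where "SF = (\<Sum>i\<le>M. supn i II f II)"
    have sn: "0 \<le> supn i II f II" if "i \<le> M" for i by (rule supn_nonneg[OF f that]) auto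
    have SF0: "SF \<ge> 0" unfolding SF_def using sn by (auto intro: sum_nonneg)
    have sle: "supn i II f II \<le> SF" if "i \<le> M" for i
      unfolding SF_def using sn that by (intro member_le_sum) auto
    have pt: "\<bar>nderiv i II f t\<bar> \<le> SF" if "i \<le> M" "t \<in> II" for i t
      using supn_upper[OF f that(1), of II t] that sle[OF that(1)] by simp
    have "\<bar>datB f j\<bar> \<le> KB * SF"
    proof (cases "j < NA + NB")
      case True
      have "\<bar>datB f j\<bar> \<le> SF"
      proof (cases "j < NA")
        case True
        then have "j \<le> M" using idxA[OF True] Ms by simp
        then show ?thesis unfolding datB_def using True pt by simp
      next
        case False
        then have "j - NA + 1 \<le> M" using idxB[OF False \<open>j < NA + NB\<close>] Ms by simp
        then show ?thesis unfolding datB_def using False \<open>j < NA + NB\<close> pt by simp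
      qed
      also have "\<dots> \<le> KB * SF"
      proof -
        have "1 \<le> KB" unfolding KB_def using K10 by simp
        then show ?thesis using SF0 mult_right_mono[of 1 KB SF] by simp
      qed
      finally show ?thesis .
    next
      case nAB: False
      let ?m = "j - NA - NB"
      let ?g = "Iop (nderiv 1 II f)"
      have cg: "Ck_on kI II ?g" by (rule ck_iop(3)[OF f M])
      have cf1: "Ck_on (max kIop kI) II (nderiv 1 II f)" by (rule ck_iop(1)[OF f M])
      have gsup: "supn i II ?g II \<le> \<bar>C1\<bar> * SF" if i: "i \<le> kI" for i
      proof -
        have cfi: "Ck_on (max kIop i) II (nderiv 1 II f)" by (rule Ck_on_mono[OF cf1]) (use i in auto)
        have X0: "0 \<le> (\<Sum>j\<le>max kIop i. supn j II (nderiv 1 II f) II)"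
          unfolding supn_shift using sn Ms i by (intro sum_nonneg) auto
        have "supn i II ?g II \<le> C1 * (\<Sum>j\<le>max kIop i. supn j II (nderiv 1 II f) II)"
          using C1 i cfi by blast
        also have "\<dots> \<le> \<bar>C1\<bar> * (\<Sum>j\<le>max kIop i. supn j II (nderiv 1 II f) II)"
          using X0 by (intro mult_right_mono) auto
        also have "(\<Sum>j\<le>max kIop i. supn j II (nderiv 1 II f) II) \<le> SF"
          unfolding supn_shift SF_def by (rule sum_shift_le) (use sn Ms i in auto)
        then have "\<bar>C1\<bar> * (\<Sum>j\<le>max kIop i. supn j II (nderiv 1 II f) II) \<le> \<bar>C1\<bar> * SF"
          by (intro mult_left_mono) auto
        finally show ?thesis .
      qed
      have gpt: "\<bar>nderiv i II ?g t\<bar> \<le> \<bar>C1\<bar> * SF" if "i \<le> kI" "t \<in> II" for i t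
        using supn_upper[OF cg that(1), of II t] gsup[OF that(1)] that by simp
      have mm: "?m \<le> r" using jN nAB unfolding NN_def NC_def by simp
      have ppt: "\<bar>nderiv i II (\<lambda>s. s ^ ?m) t\<bar> \<le> RR" if "i \<le> kI" "t \<in> II" for i t
      proof -
        have tt: "\<bar>t\<bar> \<le> 1" using that by auto
        have "\<bar>nderiv i II (\<lambda>s. s ^ ?m) t\<bar> = \<bar>poly ((pderiv ^^ i) (monom 1 ?m)) t\<bar>"
          using that by (simp add: pow_poly nd_poly)
        also have "\<dots> \<le> real ?m ^ i" by (rule pderiv_pow_monom_bound[OF tt])
        also have "\<dots> \<le> (real r + 1) ^ i" using mm by (intro power_mono) auto
        also have "\<dots> \<le> (real r + 1) ^ kI" by (rule power_increasing) (use that in auto)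
        finally show ?thesis unfolding RR_def .
      qed
      have CP: "Ck_on kI II (\<lambda>t. t ^ ?m *\<^sub>R ?g t) \<and> (\<forall>i\<le>kI. \<forall>t\<in>II.
         norm (nderiv i II (\<lambda>t. t ^ ?m *\<^sub>R ?g t) t) \<le> 2^i * (\<Sum>i'\<le>i. \<bar>nderiv i' II (\<lambda>s. s ^ ?m) t\<bar>) * (\<Sum>i'\<le>i. norm (nderiv i' II ?g t)))"
        by (rule Ck_prod[OF m11 Ck_pow[OF m11] cg])
      have cpg: "Ck_on kI II (\<lambda>s. s ^ ?m * ?g s)" using CP by simp
      have psup: "supn i II (\<lambda>s. s ^ ?m * ?g s) II \<le> K1 * SF" if i: "i \<le> kI" for i
      proof (rule supn_least)
        fix t assume t: "t \<in> II"
        have s1: "(\<Sum>i'\<le>i. \<bar>nderiv i' II (\<lambda>s. s ^ ?m) t\<bar>) \<le> (real kI + 1) * RR"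
        proof -
          have "(\<Sum>i'\<le>i. \<bar>nderiv i' II (\<lambda>s. s ^ ?m) t\<bar>) \<le> (\<Sum>i'\<le>i. RR)"
            by (rule sum_mono) (use ppt i t in auto)
          also have "\<dots> = (real i + 1) * RR" by simp
          also have "\<dots> \<le> (real kI + 1) * RR" using i RR0 by (intro mult_right_mono) auto
          finally show ?thesis .
        qed
        have s2: "(\<Sum>i'\<le>i. norm (nderiv i' II ?g t)) \<le> (real kI + 1) * (\<bar>C1\<bar> * SF)"
        proof -
          have "(\<Sum>i'\<le>i. norm (nderiv i' II ?g t)) \<le> (\<Sum>i'\<le>i. \<bar>C1\<bar> * SF)"
            by (rule sum_mono) (use gpt i t in auto)
          also have "\<dots> = (real i + 1) * (\<bar>C1\<bar> * SF)" by simp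
          also have "\<dots> \<le> (real kI + 1) * (\<bar>C1\<bar> * SF)" using i SF0 by (intro mult_right_mono) auto
          finally show ?thesis .
        qed
        have "norm (nderiv i II (\<lambda>s. s ^ ?m * ?g s) t) \<le> 2^i * (\<Sum>i'\<le>i. \<bar>nderiv i' II (\<lambda>s. s ^ ?m) t\<bar>) * (\<Sum>i'\<le>i. norm (nderiv i' II ?g t))"
          using CP i t by simp
        also have "\<dots> \<le> 2^kI * ((real kI + 1) * RR) * ((real kI + 1) * (\<bar>C1\<bar> * SF))"
          by (intro mult_mono s1 s2 power_increasing) (use i RR0 SF0 in \<open>auto intro: sum_nonneg mult_nonneg_nonneg\<close>)
        also have "\<dots> = K1 * SF" unfolding K1_def by (simp add: algebra_simps)
        finally show "norm (nderiv i II (\<lambda>s. s ^ ?m * ?g s) t) \<le> K1 * SF" .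
      qed simp
      have ihb: "\<bar>Ih (\<lambda>s. s ^ ?m * ?g s)\<bar> \<le> \<bar>C0\<bar> * (real kI + 1) * K1 * SF"
      proof -
        have X0: "0 \<le> (\<Sum>i\<le>kI. supn i II (\<lambda>s. s ^ ?m * ?g s) II)"
        proof (intro sum_nonneg)
          fix x assume "x \<in> {..kI}"
          then show "0 \<le> supn x II (\<lambda>s. s ^ ?m * ?g s) II" by (intro supn_nonneg[OF cpg]) auto
        qed
        have "\<bar>Ih (\<lambda>s. s ^ ?m * ?g s)\<bar> \<le> C0 * (\<Sum>i\<le>kI. supn i II (\<lambda>s. s ^ ?m * ?g s) II)"
          using C0 cpg by blast
        also have "\<dots> \<le> \<bar>C0\<bar> * (\<Sum>i\<le>kI. supn i II (\<lambda>s. s ^ ?m * ?g s) II)"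
          using X0 by (intro mult_right_mono) auto
        also have "\<dots> \<le> \<bar>C0\<bar> * (\<Sum>i\<le>kI. K1 * SF)"
          by (intro mult_left_mono sum_mono psup) auto
        also have "\<dots> = \<bar>C0\<bar> * (real kI + 1) * K1 * SF" by (simp add: algebra_simps)
        finally show ?thesis .
      qed
      have bb: "\<bar>(if k = 0 then f (-1) * (-1) ^ ?m else 0)\<bar> \<le> SF"
        using pt[of 0 "-1"] SF0 by (auto simp: abs_mult)
      have dj: "datB f j = Ih (\<lambda>s. s ^ ?m * ?g s) + (if k = 0 then f (-1) * (-1) ^ ?m else 0)"
        unfolding datB_def using nAB by simp
      have "\<bar>datB f j\<bar> \<le> \<bar>C0\<bar> * (real kI + 1) * K1 * SF + SF"
        unfolding dj using ihb bb abs_triangle_ineq by (smt (verit))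
      also have "\<dots> \<le> KB * SF" unfolding KB_def using SF0 by (simp add: algebra_simps)
      finally show ?thesis .
    qed
    then show "\<bar>datB f j\<bar> \<le> KB * (\<Sum>i\<le>M. supn i II f II)" unfolding SF_def .
  qed
qed

end


context refset
begin

lemma sum_le_one_term:
  fixes a :: "nat \<Rightarrow> real"
  assumes "\<And>j. j \<in> A \<Longrightarrow> a j \<ge> 0" "finite A" "i \<in> A"
  shows "a i \<le> sum a A"
  using assms by (intro member_le_sum) auto

lemma REF_scalar:
  assumes M: "M0 \<le> M" and lM: "l \<le> M" and n0M: "n0 \<le> M" and n0r: "n0 \<le> Suc r"
    and ex: "exact_for Ih Iop (-1) 1 (int n0 - 2) (int r - int k)"
  shows "\<exists>C\<ge>0. \<forall>f cp. Ck_on M II f \<longrightarrow> (\<forall>j<NN. datA (\<lambda>t. \<Sum>i<Suc r. cp i * t ^ i) j = datB f j) \<longrightarrow>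
     (\<forall>t\<in>II. \<bar>nderiv l II (\<lambda>t. f t - (\<Sum>i<Suc r. cp i * t ^ i)) t\<bar> \<le> C * (\<Sum>j=n0..M. supn j II f {-1<..1}))"
proof -
  obtain K where K0: "K \<ge> 0" and K: "\<forall>c. (\<Sum>i<Suc r. \<bar>c i\<bar>) \<le> K * (\<Sum>j<NN. \<bar>datA (\<lambda>t. \<Sum>i<Suc r. c i * t ^ i) j\<bar>)"
    using FD_app by blast
  obtain KB where KB0: "KB \<ge> 0" and KB: "\<forall>f. Ck_on M II f \<longrightarrow> (\<forall>j<NN. \<bar>datB f j\<bar> \<le> KB * (\<Sum>i\<le>M. supn i II f II))"
    using datB_bound[OF M] by blast
  define C where "C = 1 + real r ^ l * K * real NN * KB * (real M + 1)"
  have C0: "C \<ge> 0" unfolding C_def using K0 KB0 by simp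
  show ?thesis
  proof (intro exI[of _ C] conjI C0 allI impI ballI)
    fix f :: "real \<Rightarrow> real" and cp t
    assume f: "Ck_on M II f" and dat: "\<forall>j<NN. datA (\<lambda>t. \<Sum>i<Suc r. cp i * t ^ i) j = datB f j" and t: "t \<in> II"
    define RHS where "RHS = (\<Sum>j=n0..M. supn j II f {-1<..1})"
    have sno: "0 \<le> supn j II f {-1<..1}" if "j \<le> M" for j
      by (rule supn_nonneg[OF f that]) auto
    have RHS0: "RHS \<ge> 0" unfolding RHS_def using sno by (auto intro: sum_nonneg)
    have sR: "supn j II f {-1<..1} \<le> RHS" if "n0 \<le> j" "j \<le> M" for j
      unfolding RHS_def by (rule sum_le_one_term) (use sno that in auto)
    define cq where "cq = (\<lambda>i. if i < n0 then nderiv i II f 0 / fact i else 0)"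
    define Q where "Q = (\<lambda>t. \<Sum>i<Suc r. cq i * t ^ i)"
    define q where "q = (\<Sum>i<Suc r. monom (cq i) i)"
    have Qq: "Q = poly q" unfolding Q_def q_def by (rule poly_sum_monom)
    have cqq: "coeff q i = (if i < Suc r then cq i else 0)" for i
      unfolding q_def coeff_sum coeff_monom by (simp add: sum.delta)
    have dq: "q = 0 \<or> degree q < n0"
    proof (cases "n0 = 0")
      case True
      then have "coeff q i = 0" for i using cqq by (simp add: cq_def)
      then show ?thesis by (simp add: poly_eq_iff)
    next
      case False
      have "degree q \<le> n0 - 1" by (rule degree_le) (auto simp: cqq cq_def)
      then have "degree q < n0" using False by linarith
      then show ?thesis by simp
    qed
    have cQ: "Ck_on M II Q" unfolding Qq by (rule Ck_poly_all[OF m11])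
    define W where "W = (\<lambda>t. f t - Q t)"
    have WD: "Ck_on M II W \<and> (\<forall>j\<le>M. \<forall>t\<in>II. nderiv j II W t = nderiv j II f t - nderiv j II Q t)"
      unfolding W_def by (rule Ck_diff[OF m11 f cQ])
    note cW = conjunct1[OF WD]
    have Q0: "nderiv j II Q 0 = nderiv j II f 0" if "j < n0" for j
    proof -
      have "nderiv j II Q 0 = (\<Sum>i<Suc r. cq i * poly ((pderiv ^^ j) (monom 1 i)) 0)"
        unfolding Q_def by (rule nd_psum) simp
      also have "\<dots> = (\<Sum>i<Suc r. if i = j then cq i * fact i else 0)"
        by (intro sum.cong) (auto simp: pd_monom0)
      also have "\<dots> = cq j * fact j" using that n0r by (simp add: sum.delta')
      also have "\<dots> = nderiv j II f 0" using that by (simp add: cq_def)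
      finally show ?thesis .
    qed
    have Qhi: "nderiv j II Q s = 0" if "n0 \<le> j" "s \<in> II" for j s
    proof -
      have "nderiv j II Q s = (\<Sum>i<Suc r. cq i * poly ((pderiv ^^ j) (monom 1 i)) s)"
        unfolding Q_def by (rule nd_psum[OF that(2)])
      also have "\<dots> = 0"
        by (intro sum.neutral) (use that in \<open>auto simp: cq_def pd_monom_high\<close>)
      finally show ?thesis .
    qed
    have W0: "nderiv j II W 0 = 0" if "j < n0" for j
      using WD Q0[OF that] that n0M by simp
    have Whi: "nderiv j II W s = nderiv j II f s" if "n0 \<le> j" "j \<le> M" "s \<in> II" for j s
      using WD Qhi[OF that(1,3)] that by simp
    have Wlow: "\<bar>nderiv (n0 - d) II W s\<bar> \<le> supn n0 II f {-1<..1}" if "d \<le> n0" "s \<in> II" for d s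
      using that
    proof (induction d arbitrary: s)
      case 0
      then show ?case using Whi[of n0 s] supn_upper_open[OF m11 f n0M, of s] n0M by simp
    next
      case (Suc d)
      have j: "n0 - Suc d < M" using Suc n0M by simp
      have "\<bar>nderiv (n0 - Suc d) II W s\<bar> \<le> supn (Suc (n0 - Suc d)) II W II"
        by (rule mv_bound[OF cW j W0 Suc.prems(2)]) (use Suc in simp)
      also have "\<dots> \<le> supn n0 II f {-1<..1}"
      proof (rule supn_least)
        fix s' assume "s' \<in> II"
        then show "norm (nderiv (Suc (n0 - Suc d)) II W s') \<le> supn n0 II f {-1<..1}"
          using Suc.IH[of s'] Suc.prems by (simp add: Suc_diff_Suc)
      qed simp
      finally show ?case .
    qed
    have Wpt: "\<bar>nderiv j II W s\<bar> \<le> RHS" if "j \<le> M" "s \<in> II" for j s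
    proof (cases "j \<le> n0")
      case True
      have "\<bar>nderiv (n0 - (n0 - j)) II W s\<bar> \<le> supn n0 II f {-1<..1}" by (rule Wlow) (use that in auto)
      then show ?thesis using True sR[of n0] n0M by simp
    next
      case False
      then show ?thesis using Whi[of j s] that supn_upper_open[OF m11 f that(1) that(2)] sR[of j] by simp
    qed
    have Ssum: "(\<Sum>i\<le>M. supn i II W II) \<le> (real M + 1) * RHS"
    proof -
      have "(\<Sum>i\<le>M. supn i II W II) \<le> (\<Sum>i\<le>M. RHS)"
        by (intro sum_mono supn_least) (use Wpt in auto)
      then show ?thesis by (simp add: add.commute)
    qed
    define D where "D = (\<lambda>t. \<Sum>i<Suc r. (cp i - cq i) * t ^ i)"
    have datD: "datA D j = datB W j" if "j < NN" for j
    proof -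
      have pw: "\<And>i. i \<in> {..<Suc r} \<Longrightarrow> Ck_on M II (\<lambda>t. t ^ i)" using Ck_pow[OF m11] by blast
      have "datA D j = (\<Sum>i<Suc r. (cp i - cq i) * datA (\<lambda>t. t ^ i) j)"
        unfolding D_def by (rule datA_sum[OF _ pw M]) simp
      also have "\<dots> = (\<Sum>i<Suc r. cp i * datA (\<lambda>t. t ^ i) j) - (\<Sum>i<Suc r. cq i * datA (\<lambda>t. t ^ i) j)"
        by (simp add: left_diff_distrib sum_subtractf)
      also have "(\<Sum>i<Suc r. cp i * datA (\<lambda>t. t ^ i) j) = datA (\<lambda>t. \<Sum>i<Suc r. cp i * t ^ i) j"
        by (rule datA_sum[OF _ pw M, symmetric]) simp
      also have "(\<Sum>i<Suc r. cq i * datA (\<lambda>t. t ^ i) j) = datA Q j"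
        unfolding Q_def by (rule datA_sum[OF _ pw M, symmetric]) simp
      also have "datA Q j = datB Q j" unfolding Qq by (rule exact_AB[OF ex dq that])
      also have "datA (\<lambda>t. \<Sum>i<Suc r. cp i * t ^ i) j = datB f j" using dat that by blast
      also have "datB f j - datB Q j = datB W j" unfolding W_def by (rule datB_diff[OF f cQ M, symmetric])
      finally show ?thesis .
    qed
    have coef: "(\<Sum>i<Suc r. \<bar>cp i - cq i\<bar>) \<le> K * (real NN * KB * ((real M + 1) * RHS))"
    proof -
      have "(\<Sum>i<Suc r. \<bar>cp i - cq i\<bar>) \<le> K * (\<Sum>j<NN. \<bar>datA D j\<bar>)" using K[rule_format, of "\<lambda>i. cp i - cq i"] unfolding D_def by simp
      also have "(\<Sum>j<NN. \<bar>datA D j\<bar>) = (\<Sum>j<NN. \<bar>datB W j\<bar>)" using datD by simp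
      also have "\<dots> \<le> (\<Sum>j<NN. KB * (\<Sum>i\<le>M. supn i II W II))" by (intro sum_mono) (use KB cW in blast)
      also have "\<dots> = real NN * KB * (\<Sum>i\<le>M. supn i II W II)" by simp
      also have "\<dots> \<le> real NN * KB * ((real M + 1) * RHS)" using Ssum KB0 by (intro mult_left_mono) auto
      finally show ?thesis using K0 by (simp add: mult_left_mono)
    qed
    have cD: "Ck_on M II D" unfolding D_def poly_sum_monom by (rule Ck_poly_all[OF m11])
    have DD: "Ck_on M II (\<lambda>t. W t - D t) \<and> (\<forall>j\<le>M. \<forall>t\<in>II. nderiv j II (\<lambda>t. W t - D t) t = nderiv j II W t - nderiv j II D t)"
      by (rule Ck_diff[OF m11 cW cD])
    have fe: "(\<lambda>t. f t - (\<Sum>i<Suc r. cp i * t ^ i)) = (\<lambda>t. W t - D t)"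
      by (rule ext) (simp add: W_def Q_def D_def left_diff_distrib sum_subtractf)
    have "\<bar>nderiv l II (\<lambda>t. f t - (\<Sum>i<Suc r. cp i * t ^ i)) t\<bar> = \<bar>nderiv l II W t - nderiv l II D t\<bar>"
      unfolding fe using DD lM t by simp
    also have "\<dots> \<le> \<bar>nderiv l II W t\<bar> + \<bar>nderiv l II D t\<bar>" by (rule abs_triangle_ineq4)
    also have "\<bar>nderiv l II D t\<bar> \<le> real r ^ l * (\<Sum>i<Suc r. \<bar>cp i - cq i\<bar>)"
      unfolding D_def by (rule psum_deriv_bound[OF t]) simp
    also have "\<dots> \<le> real r ^ l * (K * (real NN * KB * ((real M + 1) * RHS)))"
      by (intro mult_left_mono coef) simp
    also have "\<bar>nderiv l II W t\<bar> \<le> RHS" by (rule Wpt[OF lM t])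
    finally show "\<bar>nderiv l II (\<lambda>t. f t - (\<Sum>i<Suc r. cp i * t ^ i)) t\<bar> \<le> C * (\<Sum>j=n0..M. supn j II f {-1<..1})"
      unfolding RHS_def[symmetric] C_def by (simp add: algebra_simps)
  qed
qed

end


lemma pdeg_affine:
  assumes "f \<in> Pdeg s"
  shows "(\<lambda>x. f (\<alpha> + \<beta> * x)) \<in> Pdeg s"
proof -
  obtain p where fp: "f = poly p" and p1: "s < 0 \<Longrightarrow> p = 0" and p2: "s \<ge> 0 \<Longrightarrow> int (degree p) \<le> s"
    by (rule pdeg_elim[OF assms]) blast
  define q where "q = pcompose p [:\<alpha>, \<beta>:]"
  have e: "(\<lambda>x. f (\<alpha> + \<beta> * x)) = poly q"
    unfolding q_def fp by (rule ext) (simp add: poly_pcompose algebra_simps)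
  have dq: "degree q \<le> degree p"
  proof -
    have "degree q \<le> degree p * degree [:\<alpha>, \<beta>:]" unfolding q_def by (rule degree_pcompose_le)
    also have "\<dots> \<le> degree p * 1" by (intro mult_left_mono) auto
    finally show ?thesis by simp
  qed
  show ?thesis
  proof (cases "s < 0")
    case True
    then have "poly q = (\<lambda>t. 0)" using p1 by (simp add: q_def fun_eq_iff)
    then show ?thesis using e pdeg_zero by simp
  next
    case False
    then show ?thesis unfolding e using p2 dq by (intro pdeg_poly) simp
  qed
qed

lemma Tmap_lin: "Tmap a b x = (b + a) / 2 + (b - a) / 2 * x"
  unfolding Tmap_def ..

lemma Tinv_lin: "a < b \<Longrightarrow> Tinv a b t = (- (b + a) / (b - a)) + (2 / (b - a)) * t"
  unfolding Tinv_def by (simp add: diff_divide_distrib add_divide_distrib)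

lemma Tinv_Tmap: "a < b \<Longrightarrow> Tinv a b (Tmap a b x) = x"
proof -
  assume ab: "a < b"
  have e: "2 * ((b + a) / 2 + (b - a) / 2 * x) - (b + a) = (b - a) * x" by (simp add: field_simps)
  show ?thesis unfolding Tinv_def Tmap_def e using ab by simp
qed


lemma exact_ref_iff:
  "exact_for Ih Iop (-1) 1 s i \<longleftrightarrow> (\<forall>\<phi>\<in>Pdeg s. \<forall>\<psi>\<in>Pdeg i. Ih (\<lambda>t. \<phi> t * \<psi> t) = Ih (\<lambda>t. Iop \<phi> t * \<psi> t))"
  unfolding exact_for_def locI_ref locOpS_ref ..

lemma exact_ab_iff:
  assumes ab: "a < b"
  shows "exact_for Ih Iop a b s i \<longleftrightarrow> exact_for Ih Iop (-1) 1 s i"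
proof -
  let ?T = "Tmap a b"
  have h: "(b - a) / 2 \<noteq> 0" using ab by simp
  have L: "exact_for Ih Iop a b s i \<longleftrightarrow> (\<forall>\<phi>\<in>Pdeg s. \<forall>\<psi>\<in>Pdeg i.
      Ih (\<lambda>x. \<phi> (?T x) * \<psi> (?T x)) = Ih (\<lambda>x. Iop (\<lambda>y. \<phi> (?T y)) x * \<psi> (?T x)))"
    unfolding exact_for_def locI_def locOpS_def using h ab by (simp add: Tinv_Tmap)
  have aff: "\<phi> \<in> Pdeg s' \<Longrightarrow> (\<lambda>x. \<phi> (?T x)) \<in> Pdeg s'" for \<phi> s'
    unfolding Tmap_lin by (rule pdeg_affine)
  have affi: "\<phi> \<in> Pdeg s' \<Longrightarrow> (\<lambda>x. \<phi> (Tinv a b x)) \<in> Pdeg s'" for \<phi> s'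
    unfolding Tinv_lin[OF ab] by (rule pdeg_affine)
  show ?thesis unfolding L exact_ref_iff
  proof safe
    fix \<phi> \<psi> assume H: "\<forall>\<phi>\<in>Pdeg s. \<forall>\<psi>\<in>Pdeg i. Ih (\<lambda>x. \<phi> (?T x) * \<psi> (?T x)) = Ih (\<lambda>x. Iop (\<lambda>y. \<phi> (?T y)) x * \<psi> (?T x))"
      and \<phi>: "\<phi> \<in> Pdeg s" and \<psi>: "\<psi> \<in> Pdeg i"
    have "Ih (\<lambda>x. \<phi> (Tinv a b (?T x)) * \<psi> (Tinv a b (?T x))) = Ih (\<lambda>x. Iop (\<lambda>y. \<phi> (Tinv a b (?T y))) x * \<psi> (Tinv a b (?T x)))"
      using H[rule_format, OF affi[OF \<phi>] affi[OF \<psi>]] .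
    then show "Ih (\<lambda>t. \<phi> t * \<psi> t) = Ih (\<lambda>t. Iop \<phi> t * \<psi> t)" using ab by (simp add: Tinv_Tmap)
  next
    fix \<phi> \<psi> assume H: "\<forall>\<phi>\<in>Pdeg s. \<forall>\<psi>\<in>Pdeg i. Ih (\<lambda>t. \<phi> t * \<psi> t) = Ih (\<lambda>t. Iop \<phi> t * \<psi> t)"
      and \<phi>: "\<phi> \<in> Pdeg s" and \<psi>: "\<psi> \<in> Pdeg i"
    show "Ih (\<lambda>x. \<phi> (?T x) * \<psi> (?T x)) = Ih (\<lambda>x. Iop (\<lambda>y. \<phi> (?T y)) x * \<psi> (?T x))"
      using H[rule_format, OF aff[OF \<phi>] aff[OF \<psi>]] .
  qed
qed

lemma jmin_ab: "a < b \<Longrightarrow> jmin Ih Iop a b r k rc = jmin Ih Iop (-1) 1 r k rc"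
proof -
  assume ab: "a < b"
  have e: "exact_for Ih Iop a b s i = exact_for Ih Iop (-1) 1 s i" for s i by (rule exact_ab_iff[OF ab])
  show ?thesis unfolding jmin_def rII_def e ..
qed

lemma pdeg_mono: "s \<le> s' \<Longrightarrow> f \<in> Pdeg s \<Longrightarrow> f \<in> Pdeg s'"
proof -
  assume ss: "s \<le> s'" and f: "f \<in> Pdeg s"
  obtain p where fp: "f = poly p" and p1: "s < 0 \<Longrightarrow> p = 0" and p2: "s \<ge> 0 \<Longrightarrow> int (degree p) \<le> s"
    by (rule pdeg_elim[OF f]) blast
  show ?thesis
  proof (cases "s < 0")
    case True
    then have "f = (\<lambda>t. 0)" using fp p1 by (simp add: fun_eq_iff)
    then show ?thesis using pdeg_zero by simp
  next
    case False
    then show ?thesis unfolding fp using p2 ss by (intro pdeg_poly) simp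
  qed
qed

lemma exact_mono: "s \<le> s' \<Longrightarrow> exact_for Ih Iop a b s' i \<Longrightarrow> exact_for Ih Iop a b s i"
  unfolding exact_for_def using pdeg_mono by blast

context refset
begin

lemma exact_m1: "exact_for Ih Iop (-1) 1 (-1) i"
  unfolding exact_ref_iff
proof safe
  fix \<phi> \<psi> assume \<phi>: "\<phi> \<in> Pdeg (-1)" and \<psi>: "\<psi> \<in> Pdeg i"
  obtain p where "\<phi> = poly p" "p = 0" using \<phi> by (rule pdeg_elim) auto
  then have \<phi>0: "\<phi> = (\<lambda>t. 0)" by (simp add: fun_eq_iff)
  obtain p2 where \<psi>p: "\<psi> = poly p2" using \<psi> by (rule pdeg_elim)
  have c0: "Ck_on (max kIop kI) II (\<lambda>t. 0::real)" using Ck_const[OF m11] by blast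
  have ci: "Ck_on kI II (Iop (\<lambda>t. 0))" by (rule reg_Iop[OF c0])
  have cz: "Ck_on kIop II (\<lambda>t. 0::real)" using Ck_const[OF m11] by blast
  have z: "Iop (\<lambda>t. 0) t = 0" if "t \<in> II" for t
    using Iop_cmult[OF cz that, of 0] by simp
  have c1: "Ck_on kI II (\<lambda>t. Iop (\<lambda>t. 0) t * \<psi> t)"
    unfolding \<psi>p by (rule Ck_mult[OF m11 ci Ck_poly_all[OF m11]])
  have c2: "Ck_on kI II (\<lambda>t. 0::real)" using Ck_const[OF m11] by blast
  have "Ih (\<lambda>t. Iop (\<lambda>t. 0) t * \<psi> t) = Ih (\<lambda>t. 0)" by (rule Ih_local[OF c1 c2]) (simp add: z)
  then show "Ih (\<lambda>t. \<phi> t * \<psi> t) = Ih (\<lambda>t. Iop \<phi> t * \<psi> t)" unfolding \<phi>0 by simp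
qed

lemma jmin_props:
  fixes rc :: nat
  defines "n0 \<equiv> jmin Ih Iop (-1) 1 r k rc"
  shows "n0 \<le> Suc r" "exact_for Ih Iop (-1) 1 (int n0 - 2) (int r - int k)"
proof -
  define i where "i = int r - int k"
  define T where "T = {s::int. s \<ge> -1 \<and> exact_for Ih Iop (-1) 1 s i}"
  define rr where "rr = rII Ih Iop (-1) 1 i"
  have rrT: "rr = Sup (ereal ` real_of_int ` T)"
    unfolding rr_def rII_def T_def by (rule arg_cong[where f=Sup]) auto
  have mT: "-1 \<in> T" unfolding T_def using exact_m1 by simp
  have n0e: "n0 = (if rr = \<infinity> then min rc (r + 1) else min rc (min (r + 1) (nat (\<lfloor>real_of_ereal rr\<rfloor> + 2))))"
    unfolding n0_def jmin_def rr_def i_def Let_def ..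
  show "n0 \<le> Suc r" unfolding n0e by auto
  show "exact_for Ih Iop (-1) 1 (int n0 - 2) (int r - int k)"
  proof (cases "rr = \<infinity>")
    case True
    have "\<exists>s\<in>T. int n0 - 2 \<le> s"
    proof (rule ccontr)
      assume "\<not> (\<exists>s\<in>T. int n0 - 2 \<le> s)"
      then have "\<forall>s\<in>T. s \<le> int n0 - 2" by auto
      then have "rr \<le> ereal (real_of_int (int n0 - 2))" unfolding rrT
        by (intro Sup_least) auto
      then show False using True by simp
    qed
    then obtain s where "s \<in> T" "int n0 - 2 \<le> s" by blast
    then show ?thesis using exact_mono unfolding T_def i_def by blast
  next
    case False
    have bd: "\<forall>s\<in>T. ereal (real_of_int s) \<le> rr" unfolding rrT by (auto intro: Sup_upper)
    have rrm: "rr \<ge> ereal (-1)" using bd mT by force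
    obtain R where R: "rr = ereal R" using False rrm by (cases rr) auto
    have sub: "T \<subseteq> {-1..\<lfloor>R\<rfloor>}" using bd unfolding R T_def by (auto simp: le_floor_iff)
    have finT: "finite T" by (rule finite_subset[OF sub]) simp
    have neT: "T \<noteq> {}" using mT by blast
    define mx where "mx = Max T"
    have mxT: "mx \<in> T" unfolding mx_def using finT neT by simp
    have mxg: "\<forall>s\<in>T. s \<le> mx" unfolding mx_def using finT by simp
    have "rr = ereal (real_of_int mx)"
    proof (rule antisym)
      show "rr \<le> ereal (real_of_int mx)" unfolding rrT using mxg by (intro Sup_least) auto
      show "ereal (real_of_int mx) \<le> rr" using bd mxT by blast
    qed
    then have fl: "\<lfloor>real_of_ereal rr\<rfloor> = mx" by simp
    have mx1: "mx \<ge> -1" using mxT unfolding T_def by simp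
    have "n0 \<le> nat (mx + 2)" unfolding n0e using False fl by simp
    then have "int n0 - 2 \<le> mx" using mx1 by linarith
    then show ?thesis using exact_mono mxT unfolding T_def i_def by blast
  qed
qed

end


lemma Ck_Tmap:
  fixes f :: "real \<Rightarrow> 'a::real_normed_vector"
  assumes ab: "a < b" and f: "Ck_on m {a..b} f"
  shows "Ck_on m II (\<lambda>s. f (Tmap a b s)) \<and> (\<forall>j\<le>m. \<forall>s\<in>II.
     nderiv j II (\<lambda>s. f (Tmap a b s)) s = ((b - a) / 2) ^ j *\<^sub>R nderiv j {a..b} f (Tmap a b s))"
proof -
  have S: "{(b + a) / 2 + (b - a) / 2 * -1..(b + a) / 2 + (b - a) / 2 * 1} = {a..b}"
    by (simp add: field_simps)
  have bp: "(b - a) / 2 > 0" using ab by simp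
  have f': "Ck_on m {(b + a) / 2 + (b - a) / 2 * -1..(b + a) / 2 + (b - a) / 2 * 1} f"
    unfolding S by (rule f)
  have H: "Ck_on m {-1..1} (\<lambda>s. f ((b + a) / 2 + (b - a) / 2 * s)) \<and> (\<forall>j\<le>m. \<forall>s\<in>{-1..1}.
     nderiv j {-1..1} (\<lambda>s. f ((b + a) / 2 + (b - a) / 2 * s)) s = ((b - a) / 2)^j *\<^sub>R nderiv j {(b + a) / 2 + (b - a) / 2 * -1..(b + a) / 2 + (b - a) / 2 * 1} f ((b + a) / 2 + (b - a) / 2 * s))"
    by (rule Ck_affine[OF mm11 bp f'])
  show ?thesis using H unfolding S Tmap_lin .
qed

lemma Tmap_m1: "Tmap a b (-1) = a" unfolding Tmap_def by (simp add: field_simps)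
lemma Tmap_1: "Tmap a b 1 = b" unfolding Tmap_def by (simp add: field_simps)
lemma Tinv_a: "a < b \<Longrightarrow> Tinv a b a = -1" unfolding Tinv_def by (simp add: field_simps)

lemma Tmap_mem: "a < b \<Longrightarrow> s \<in> {-1..1} \<Longrightarrow> Tmap a b s \<in> {a..b}"
proof -
  assume ab: "a < b" and s: "s \<in> {-1..1}"
  have "(b - a) * (-1) \<le> (b - a) * s" using ab s by (intro mult_left_mono) auto
  moreover have "(b - a) * s \<le> (b - a) * 1" using ab s by (intro mult_left_mono) auto
  ultimately show ?thesis unfolding Tmap_def by (auto simp: field_simps)
qed

lemma Tmap_mem_open: "a < b \<Longrightarrow> s \<in> {-1<..1} \<Longrightarrow> Tmap a b s \<in> {a<..b}"
proof -
  assume ab: "a < b" and s: "s \<in> {-1<..1}"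
  have "(b - a) * (-1) < (b - a) * s" using ab s by (intro mult_strict_left_mono) auto
  moreover have "(b - a) * s \<le> (b - a) * 1" using ab s by (intro mult_left_mono) auto
  ultimately show ?thesis unfolding Tmap_def by (auto simp: field_simps)
qed

lemma Tinv_mem_open: "a < b \<Longrightarrow> t \<in> {a<..b} \<Longrightarrow> Tinv a b t \<in> {-1<..1}"
  unfolding Tinv_def by (auto simp: field_simps)

lemma Tmap_Tinv: "a < b \<Longrightarrow> Tmap a b (Tinv a b t) = t"
proof -
  assume ab: "a < b"
  have e: "(b - a) / 2 * ((2 * t - (b + a)) / (b - a)) = (2 * t - (b + a)) / 2" using ab by (simp add: field_simps)
  show ?thesis unfolding Tmap_def Tinv_def e by (simp add: add_divide_distrib[symmetric])
qed

lemma Ck_vpoly: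
  fixes c :: "nat \<Rightarrow> real ^ 'd"
  assumes xy: "x < y"
  shows "Ck_on m {x..y} (\<lambda>t. \<Sum>i<n. t ^ i *\<^sub>R c i)"
proof -
  have "\<And>i. i \<in> {..<n} \<Longrightarrow> Ck_on m {x..y} (\<lambda>t. t ^ i *\<^sub>R c i)"
    using Ck_vec[OF xy Ck_pow[OF xy]] by blast
  then show ?thesis using Ck_sum[OF xy, where A="{..<n}" and f="\<lambda>i t. t ^ i *\<^sub>R c i" and m=m] by blast
qed

lemma A2_scalar:
  fixes Ih :: "(real \<Rightarrow> real) \<Rightarrow> real"
  assumes A2: "\<exists>C0. \<forall>\<phi> :: real \<Rightarrow> real ^ 'd. Ck_on kI {-1..1} \<phi> \<longrightarrow>
        norm (compI Ih \<phi>) \<le> C0 * (\<Sum>j\<le>kI. supn j {-1..1} \<phi> {-1..1})"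
  shows "\<exists>C0. \<forall>g. Ck_on kI {-1..1} g \<longrightarrow> \<bar>Ih g\<bar> \<le> C0 * (\<Sum>j\<le>kI. supn j {-1..1} g {-1..1})"
proof -
  obtain C0 where C0: "\<forall>\<phi> :: real \<Rightarrow> real ^ 'd. Ck_on kI II \<phi> \<longrightarrow>
        norm (compI Ih \<phi>) \<le> C0 * (\<Sum>j\<le>kI. supn j II \<phi> II)" using A2 by blast
  define e where "e = (1 :: real ^ 'd)"
  have n1: "norm e > 0" unfolding e_def by (simp add: vec_eq_iff)
  show ?thesis
  proof (intro exI[of _ "\<bar>C0\<bar>"] allI impI)
    fix g :: "real \<Rightarrow> real" assume g: "Ck_on kI II g"
    define \<phi> where "\<phi> = (\<lambda>t. g t *\<^sub>R e)"
    have G: "Ck_on kI II \<phi> \<and> (\<forall>j\<le>kI. \<forall>t\<in>II. nderiv j II \<phi> t = nderiv j II g t *\<^sub>R e)"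
      unfolding \<phi>_def by (rule Ck_vec[OF mm11 g])
    have comp: "compI Ih \<phi> = Ih g *\<^sub>R e"
      unfolding compI_def \<phi>_def e_def by (simp add: vec_eq_iff)
    have sp: "supn j II \<phi> II \<le> supn j II g II * norm e" if j: "j \<le> kI" for j
    proof (rule supn_least)
      fix t assume t: "t \<in> II"
      have "norm (nderiv j II \<phi> t) = \<bar>nderiv j II g t\<bar> * norm e" using G j t by simp
      also have "\<dots> \<le> supn j II g II * norm e"
      proof -
        have "norm (nderiv j II g t) \<le> supn j II g II" by (rule supn_upper[OF g j]) (use t in auto)
        then show ?thesis by (intro mult_right_mono) auto
      qed
      finally show "norm (nderiv j II \<phi> t) \<le> supn j II g II * norm e" .
    qed simp
    have X0: "0 \<le> (\<Sum>j\<le>kI. supn j II \<phi> II)"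
      by (intro sum_nonneg) (auto intro: supn_nonneg[OF conjunct1[OF G]])
    have "\<bar>Ih g\<bar> * norm e = norm (compI Ih \<phi>)" unfolding comp by simp
    also have "\<dots> \<le> C0 * (\<Sum>j\<le>kI. supn j II \<phi> II)" using C0 G by blast
    also have "\<dots> \<le> \<bar>C0\<bar> * (\<Sum>j\<le>kI. supn j II \<phi> II)" using X0 by (intro mult_right_mono) auto
    also have "\<dots> \<le> \<bar>C0\<bar> * (\<Sum>j\<le>kI. supn j II g II * norm e)"
      by (intro mult_left_mono sum_mono sp) auto
    also have "\<dots> = (\<bar>C0\<bar> * (\<Sum>j\<le>kI. supn j II g II)) * norm e"
      by (simp add: sum_distrib_right mult.assoc)
    finally show "\<bar>Ih g\<bar> \<le> \<bar>C0\<bar> * (\<Sum>j\<le>kI. supn j II g II)"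
      using n1 by (simp add: mult_le_cancel_right)
  qed
qed

lemma A3_scalar:
  fixes Iop :: "(real \<Rightarrow> real) \<Rightarrow> (real \<Rightarrow> real)"
  assumes reg_Iop: "\<And>m f. Ck_on (max kIop m) {-1..1} f \<Longrightarrow> Ck_on m {-1..1} (Iop f)"
    and A3: "\<exists>C1. \<forall>m \<le> kI. \<forall>\<phi> :: real \<Rightarrow> real ^ 'd. Ck_on (max kIop m) {-1..1} \<phi> \<longrightarrow>
        supn m {-1..1} (compOp Iop \<phi>) {-1..1}
          \<le> C1 * (\<Sum>j\<le>max kIop m. supn j {-1..1} \<phi> {-1..1})"
  shows "\<exists>C1. \<forall>m\<le>kI. \<forall>g. Ck_on (max kIop m) {-1..1} g \<longrightarrow>
        supn m {-1..1} (Iop g) {-1..1} \<le> C1 * (\<Sum>j\<le>max kIop m. supn j {-1..1} g {-1..1})"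
proof -
  obtain C1 where C1: "\<forall>m \<le> kI. \<forall>\<phi> :: real \<Rightarrow> real ^ 'd. Ck_on (max kIop m) II \<phi> \<longrightarrow>
        supn m II (compOp Iop \<phi>) II \<le> C1 * (\<Sum>j\<le>max kIop m. supn j II \<phi> II)" using A3 by blast
  define e where "e = (1 :: real ^ 'd)"
  have n1: "norm e > 0" unfolding e_def by (simp add: vec_eq_iff)
  show ?thesis
  proof (intro exI[of _ "\<bar>C1\<bar>"] allI impI)
    fix m and g :: "real \<Rightarrow> real" assume m: "m \<le> kI" and g: "Ck_on (max kIop m) II g"
    define \<phi> where "\<phi> = (\<lambda>t. g t *\<^sub>R e)"
    have G: "Ck_on (max kIop m) II \<phi> \<and> (\<forall>j\<le>max kIop m. \<forall>t\<in>II. nderiv j II \<phi> t = nderiv j II g t *\<^sub>R e)"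
      unfolding \<phi>_def by (rule Ck_vec[OF mm11 g])
    have ig: "Ck_on m II (Iop g)" by (rule reg_Iop[OF g])
    have co: "compOp Iop \<phi> = (\<lambda>t. Iop g t *\<^sub>R e)"
      unfolding compOp_def \<phi>_def e_def by (simp add: vec_eq_iff fun_eq_iff)
    have IG: "Ck_on m II (\<lambda>t. Iop g t *\<^sub>R e) \<and> (\<forall>j\<le>m. \<forall>t\<in>II. nderiv j II (\<lambda>t. Iop g t *\<^sub>R e) t = nderiv j II (Iop g) t *\<^sub>R e)"
      by (rule Ck_vec[OF mm11 ig])
    have sp: "supn j II \<phi> II \<le> supn j II g II * norm e" if j: "j \<le> max kIop m" for j
    proof (rule supn_least)
      fix t assume t: "t \<in> II"
      have "norm (nderiv j II \<phi> t) = \<bar>nderiv j II g t\<bar> * norm e" using G j t by simp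
      also have "\<dots> \<le> supn j II g II * norm e"
      proof -
        have "norm (nderiv j II g t) \<le> supn j II g II" by (rule supn_upper[OF g j]) (use t in auto)
        then show ?thesis by (intro mult_right_mono) auto
      qed
      finally show "norm (nderiv j II \<phi> t) \<le> supn j II g II * norm e" .
    qed simp
    have X0: "0 \<le> (\<Sum>j\<le>max kIop m. supn j II \<phi> II)"
      by (intro sum_nonneg) (auto intro: supn_nonneg[OF conjunct1[OF G]])
    have s1: "supn m II (Iop g) II * norm e \<le> supn m II (compOp Iop \<phi>) II"
    proof -
      have "supn m II (Iop g) II \<le> supn m II (compOp Iop \<phi>) II / norm e"
      proof (rule supn_least)
        fix t assume t: "t \<in> II"
        have "norm (nderiv m II (compOp Iop \<phi>) t) = \<bar>nderiv m II (Iop g) t\<bar> * norm e"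
          unfolding co using IG t by simp
        moreover have "norm (nderiv m II (compOp Iop \<phi>) t) \<le> supn m II (compOp Iop \<phi>) II"
          unfolding co by (rule supn_upper[OF conjunct1[OF IG]]) (use t in auto)
        ultimately show "norm (nderiv m II (Iop g) t) \<le> supn m II (compOp Iop \<phi>) II / norm e"
          using n1 by (simp add: pos_le_divide_eq)
      qed simp
      then show ?thesis using n1 by (simp add: pos_le_divide_eq)
    qed
    have "supn m II (Iop g) II * norm e \<le> C1 * (\<Sum>j\<le>max kIop m. supn j II \<phi> II)"
      using s1 C1 m G by (meson order_trans)
    also have "\<dots> \<le> \<bar>C1\<bar> * (\<Sum>j\<le>max kIop m. supn j II \<phi> II)" using X0 by (intro mult_right_mono) auto
    also have "\<dots> \<le> \<bar>C1\<bar> * (\<Sum>j\<le>max kIop m. supn j II g II * norm e)"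
      by (intro mult_left_mono sum_mono sp) auto
    also have "\<dots> = (\<bar>C1\<bar> * (\<Sum>j\<le>max kIop m. supn j II g II)) * norm e"
      by (simp add: sum_distrib_right mult.assoc)
    finally show "supn m II (Iop g) II \<le> \<bar>C1\<bar> * (\<Sum>j\<le>max kIop m. supn j II g II)"
      using n1 by (simp add: mult_le_cancel_right)
  qed
qed


lemma inner_sc_axis: "inner x (y *\<^sub>R axis c 1) = y * (x $ c)"
  by (simp add: inner_axis)

context refset
begin

lemma data_transfer:
  fixes v p :: "real \<Rightarrow> real ^ 'd" and a b :: real
  assumes ab: "a < b" and M: "M0 \<le> M" and v: "Ck_on M {a..b} v"
    and J: "is_Jn Ih Iop r k a b v p" and jN: "j < NN"
  shows "datA (\<lambda>s. p (Tmap a b s) $ c) j = datB (\<lambda>s. v (Tmap a b s) $ c) j"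
proof -
  define h where "h = (b - a) / 2"
  have h0: "h > 0" unfolding h_def using ab by simp
  have Ms: "k div 2 \<le> M" "kI + 1 \<le> M" "kIop + 1 \<le> M" using M0_le[OF M] by auto
  have pV: "p \<in> VPdeg (int r)" using J unfolding is_Jn_def by blast
  then obtain cc where p: "p = (\<lambda>t. \<Sum>i<nat (int r + 1). t ^ i *\<^sub>R cc i)" unfolding VPdeg_def by blast
  have pC: "Ck_on N {a..b} p" for N unfolding p by (rule Ck_vpoly[OF ab])
  let ?T = "Tmap a b"
  define V where "V = (\<lambda>s. v (?T s))"
  define P where "P = (\<lambda>s. p (?T s))"
  have HV: "Ck_on M II V \<and> (\<forall>j\<le>M. \<forall>s\<in>II. nderiv j II V s = h ^ j *\<^sub>R nderiv j {a..b} v (?T s))"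
    unfolding V_def h_def by (rule Ck_Tmap[OF ab v])
  have HP: "Ck_on M II P \<and> (\<forall>j\<le>M. \<forall>s\<in>II. nderiv j II P s = h ^ j *\<^sub>R nderiv j {a..b} p (?T s))"
    unfolding P_def h_def by (rule Ck_Tmap[OF ab pC])
  have Vc: "Ck_on M II (\<lambda>s. V s $ c) \<and> (\<forall>j\<le>M. \<forall>s\<in>II. nderiv j II (\<lambda>s. V s $ c) s = nderiv j II V s $ c)"
    by (rule Ck_comp[OF m11 conjunct1[OF HV]])
  have Pc: "Ck_on M II (\<lambda>s. P s $ c) \<and> (\<forall>j\<le>M. \<forall>s\<in>II. nderiv j II (\<lambda>s. P s $ c) s = nderiv j II P s $ c)"
    by (rule Ck_comp[OF m11 conjunct1[OF HP]])
  have ndV: "nderiv i II (\<lambda>s. V s $ c) s = h ^ i * nderiv i {a..b} v (?T s) $ c" if "i \<le> M" "s \<in> II" for i s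
    using HV Vc that by simp
  have ndP: "nderiv i II (\<lambda>s. P s $ c) s = h ^ i * nderiv i {a..b} p (?T s) $ c" if "i \<le> M" "s \<in> II" for i s
    using HP Pc that by simp
  have J1: "k \<ge> 1 \<longrightarrow> (\<forall>i \<le> (k - 1) div 2. nderiv i {a..b} p a = nderiv i {a..b} v a)"
    and J2: "k \<ge> 2 \<longrightarrow> (\<forall>i \<in> {1..k div 2}. nderiv i {a..b} p b = nderiv i {a..b} v b)"
    and J3: "\<forall>\<phi>\<in>VPdeg (int r - int k).
        locI Ih a b (\<lambda>t. inner (nderiv 1 {a..b} p t) (\<phi> t))
          + (if k = 0 then inner (p a) (\<phi> a) else 0)
        = locI Ih a b (\<lambda>t. inner (locOpV Iop a b (nderiv 1 {a..b} v) t) (\<phi> t))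
          + (if k = 0 then inner (v a) (\<phi> a) else 0)"
    using J unfolding is_Jn_def by blast+
  show ?thesis
  proof (cases "j < NA")
    case True
    have k1: "k \<ge> 1" using True unfolding NA_def by (cases "k = 0") auto
    have jk: "j \<le> (k - 1) div 2" using True k1 unfolding NA_def by auto
    have jM: "j \<le> M" using idxA[OF True] Ms by simp
    have "datA (\<lambda>s. P s $ c) j = h ^ j * nderiv j {a..b} p a $ c"
      unfolding datA_def using True ndP[OF jM, of "-1"] by (simp add: Tmap_m1)
    also have "\<dots> = h ^ j * nderiv j {a..b} v a $ c" using J1 k1 jk by simp
    also have "\<dots> = datB (\<lambda>s. V s $ c) j"
      unfolding datB_def using True ndV[OF jM, of "-1"] by (simp add: Tmap_m1)
    finally show ?thesis unfolding P_def V_def .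
  next
    case nA: False
    show ?thesis
    proof (cases "j < NA + NB")
      case True
      define j' where "j' = j - NA + 1"
      have jk: "j' \<in> {1..k div 2}" using idxB[OF nA True] unfolding j'_def by simp
      have k2: "k \<ge> 2" using jk by auto
      have jM: "j' \<le> M" using jk Ms by simp
      have "datA (\<lambda>s. P s $ c) j = h ^ j' * nderiv j' {a..b} p b $ c"
        unfolding datA_def using nA True ndP[OF jM, of 1] by (simp add: Tmap_1 j'_def)
      also have "\<dots> = h ^ j' * nderiv j' {a..b} v b $ c" using J2 k2 jk by simp
      also have "\<dots> = datB (\<lambda>s. V s $ c) j"
        unfolding datB_def using nA True ndV[OF jM, of 1] by (simp add: Tmap_1 j'_def)
      finally show ?thesis unfolding P_def V_def .
    next
      case nB: False
      define m where "m = j - NA - NB"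
      have mr: "m \<le> r - k" using jN nB unfolding m_def NN_def NC_def by simp
      define \<phi> where "\<phi> = (\<lambda>t. (Tinv a b t) ^ m *\<^sub>R axis c (1::real))"
      have pw: "(\<lambda>s::real. s ^ m) \<in> Pdeg (int r - int k)"
        unfolding pow_poly by (rule pdeg_poly) (use mr kr in \<open>auto simp: degree_monom_eq\<close>)
      have "(\<lambda>t. (Tinv a b t) ^ m) \<in> Pdeg (int r - int k)"
        unfolding Tinv_lin[OF ab] by (rule pdeg_affine[OF pw])
      then obtain d where dd: "(\<lambda>t. (Tinv a b t) ^ m) = (\<lambda>t. \<Sum>i<nat (int r - int k + 1). d i * t ^ i)"
        unfolding Pdeg_def by blast
      have "\<phi> = (\<lambda>t. \<Sum>i<nat (int r - int k + 1). t ^ i *\<^sub>R (d i *\<^sub>R axis c 1))"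
      proof (rule ext)
        fix t
        have "(Tinv a b t) ^ m = (\<Sum>i<nat (int r - int k + 1). d i * t ^ i)" using dd by (rule fun_cong)
        then show "\<phi> t = (\<Sum>i<nat (int r - int k + 1). t ^ i *\<^sub>R (d i *\<^sub>R axis c 1))"
          unfolding \<phi>_def by (simp add: scaleR_sum_left mult.commute)
      qed
      then have \<phi>V: "\<phi> \<in> VPdeg (int r - int k)" unfolding VPdeg_def
        by (intro CollectI exI[of _ "\<lambda>i. d i *\<^sub>R axis c 1"])
      have J3': "locI Ih a b (\<lambda>t. inner (nderiv 1 {a..b} p t) (\<phi> t))
          + (if k = 0 then inner (p a) (\<phi> a) else 0)
        = locI Ih a b (\<lambda>t. inner (locOpV Iop a b (nderiv 1 {a..b} v) t) (\<phi> t))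
          + (if k = 0 then inner (v a) (\<phi> a) else 0)" using J3 \<phi>V by blast
      let ?p1 = "nderiv 1 {a..b} p" and ?v1 = "nderiv 1 {a..b} v"
      define u where "u = (\<lambda>s'. ?v1 (?T s') $ c)"
      have L1: "locI Ih a b (\<lambda>t. inner (?p1 t) (\<phi> t)) = h * Ih (\<lambda>s. s ^ m * ?p1 (?T s) $ c)"
      proof -
        have "(\<lambda>s. inner (?p1 (?T s)) (\<phi> (?T s))) = (\<lambda>s. s ^ m * ?p1 (?T s) $ c)"
          by (rule ext) (simp add: \<phi>_def Tinv_Tmap[OF ab] inner_sc_axis cart_eq_inner_axis[symmetric])
        then show ?thesis unfolding locI_def h_def by simp
      qed
      have L2: "locI Ih a b (\<lambda>t. inner (locOpV Iop a b ?v1 t) (\<phi> t)) = h * Ih (\<lambda>s. s ^ m * Iop u s)"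
      proof -
        have "(\<lambda>s. inner (locOpV Iop a b ?v1 (?T s)) (\<phi> (?T s))) = (\<lambda>s. s ^ m * Iop u s)"
          by (rule ext) (simp add: \<phi>_def Tinv_Tmap[OF ab] inner_sc_axis cart_eq_inner_axis[symmetric] locOpV_def compOp_def u_def)
        then show ?thesis unfolding locI_def h_def by simp
      qed
      have B1: "inner (p a) (\<phi> a) = P (-1) $ c * (-1) ^ m"
        unfolding \<phi>_def P_def by (simp add: Tinv_a[OF ab] Tmap_m1 inner_sc_axis cart_eq_inner_axis[symmetric])
      have B2: "inner (v a) (\<phi> a) = V (-1) $ c * (-1) ^ m"
        unfolding \<phi>_def V_def by (simp add: Tinv_a[OF ab] Tmap_m1 inner_sc_axis cart_eq_inner_axis[symmetric])
      have p1C: "Ck_on kI II (\<lambda>s. ?p1 (?T s) $ c)"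
      proof -
        have "Ck_on kI {a..b} ?p1" using Ck_shift[OF pC[of "Suc kI"]] .
        then have "Ck_on kI II (\<lambda>s. ?p1 (?T s))" using Ck_Tmap[OF ab] by blast
        then show ?thesis using Ck_comp[OF m11] by blast
      qed
      have GC: "Ck_on kI II (\<lambda>s. s ^ m * ?p1 (?T s) $ c)" by (rule Ck_mult[OF m11 Ck_pow[OF m11] p1C])
      have uC: "Ck_on (M - 1) II u"
      proof -
        have "Ck_on (Suc (M - 1)) {a..b} v" using v Ms by simp
        then have "Ck_on (M - 1) {a..b} ?v1" by (rule Ck_shift)
        then have "Ck_on (M - 1) II (\<lambda>s. ?v1 (?T s))" using Ck_Tmap[OF ab] by blast
        then show ?thesis unfolding u_def using Ck_comp[OF m11] by blast
      qed
      have uC2: "Ck_on (max kIop kI) II u" by (rule Ck_on_mono[OF uC]) (use Ms in auto)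
      have uC3: "Ck_on kIop II u" by (rule Ck_on_mono[OF uC]) (use Ms in auto)
      have eA: "Ih (\<lambda>s. s ^ m * nderiv 1 II (\<lambda>s. P s $ c) s) = h * Ih (\<lambda>s. s ^ m * ?p1 (?T s) $ c)"
      proof -
        have c1: "Ck_on kI II (\<lambda>s. s ^ m * nderiv 1 II (\<lambda>s. P s $ c) s)" by (rule ck_C[OF conjunct1[OF Pc] Ms(2)])
        have c2: "Ck_on kI II (\<lambda>s. h * (s ^ m * ?p1 (?T s) $ c))" using Ck_mult_const[OF m11 GC] by blast
        have "Ih (\<lambda>s. s ^ m * nderiv 1 II (\<lambda>s. P s $ c) s) = Ih (\<lambda>s. h * (s ^ m * ?p1 (?T s) $ c))"
          by (rule Ih_local[OF c1 c2]) (use ndP Ms in simp)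
        also have "\<dots> = h * Ih (\<lambda>s. s ^ m * ?p1 (?T s) $ c)" by (rule Ih_cmult[OF GC])
        finally show ?thesis .
      qed
      have eB: "Ih (\<lambda>s. s ^ m * Iop (nderiv 1 II (\<lambda>s. V s $ c)) s) = h * Ih (\<lambda>s. s ^ m * Iop u s)"
      proof -
        have cn: "Ck_on kIop II (nderiv 1 II (\<lambda>s. V s $ c))" by (rule ck_iop(2)[OF conjunct1[OF Vc] M])
        have chu: "Ck_on kIop II (\<lambda>s. h * u s)" using Ck_mult_const[OF m11 uC3] by blast
        have io: "Iop (nderiv 1 II (\<lambda>s. V s $ c)) s = h * Iop u s" if s: "s \<in> II" for s
        proof -
          have "Iop (nderiv 1 II (\<lambda>s. V s $ c)) s = Iop (\<lambda>s. h * u s) s"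
            by (rule Iop_local[OF cn chu _ s]) (use ndV Ms in \<open>simp add: u_def\<close>)
          also have "\<dots> = h * Iop u s" by (rule Iop_cmult[OF uC3 s])
          finally show ?thesis .
        qed
        have iu: "Ck_on kI II (Iop u)" by (rule reg_Iop[OF uC2])
        have cu: "Ck_on kI II (\<lambda>s. s ^ m * Iop u s)" by (rule Ck_mult[OF m11 Ck_pow[OF m11] iu])
        have c1: "Ck_on kI II (\<lambda>s. s ^ m * Iop (nderiv 1 II (\<lambda>s. V s $ c)) s)" by (rule ck_iop(4)[OF conjunct1[OF Vc] M])
        have c2: "Ck_on kI II (\<lambda>s. h * (s ^ m * Iop u s))" using Ck_mult_const[OF m11 cu] by blast
        have "Ih (\<lambda>s. s ^ m * Iop (nderiv 1 II (\<lambda>s. V s $ c)) s) = Ih (\<lambda>s. h * (s ^ m * Iop u s))"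
        proof (rule Ih_local[OF c1 c2])
          fix s assume s: "s \<in> II"
          show "s ^ m * Iop (nderiv 1 II (\<lambda>s. V s $ c)) s = h * (s ^ m * Iop u s)"
            unfolding io[OF s] by simp
        qed
        also have "\<dots> = h * Ih (\<lambda>s. s ^ m * Iop u s)" by (rule Ih_cmult[OF cu])
        finally show ?thesis .
      qed
      have dA: "datA (\<lambda>s. P s $ c) j = Ih (\<lambda>s. s ^ m * nderiv 1 II (\<lambda>s. P s $ c) s) + (if k = 0 then P (-1) $ c * (-1) ^ m else 0)"
        unfolding datA_def m_def using nA nB by (simp only: if_False)
      have dB: "datB (\<lambda>s. V s $ c) j = Ih (\<lambda>s. s ^ m * Iop (nderiv 1 II (\<lambda>s. V s $ c)) s) + (if k = 0 then V (-1) $ c * (-1) ^ m else 0)"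
        unfolding datB_def m_def using nA nB by (simp only: if_False)
      have "datA (\<lambda>s. P s $ c) j = datB (\<lambda>s. V s $ c) j"
        unfolding dA dB eA eB using J3' unfolding L1 L2 B1 B2 .
      then show ?thesis unfolding P_def V_def .
    qed
  qed
qed

end


theorem mainTheorem9:
  fixes r k kI kIop l rc :: nat
    and Ih :: "(real \<Rightarrow> real) \<Rightarrow> real"
    and Iop :: "(real \<Rightarrow> real) \<Rightarrow> (real \<Rightarrow> real)"
  assumes kr: "k \<le> r"
    and lin_Ih: "\<And>f g c. Ck_on kI {-1..1} f \<Longrightarrow> Ck_on kI {-1..1} g \<Longrightarrow>
        Ih (\<lambda>t. f t + g t) = Ih f + Ih g \<and> Ih (\<lambda>t. c * f t) = c * Ih f"
    and lin_Iop: "\<And>f g c. Ck_on kIop {-1..1} f \<Longrightarrow> Ck_on kIop {-1..1} g \<Longrightarrow>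
        (\<forall>t\<in>{-1..1}. Iop (\<lambda>s. f s + g s) t = Iop f t + Iop g t \<and> Iop (\<lambda>s. c * f s) t = c * Iop f t)"
    and reg_Iop: "\<And>m f. Ck_on (max kIop m) {-1..1} f \<Longrightarrow> Ck_on m {-1..1} (Iop f)"
    and A1: "\<And>\<psi>. \<psi> \<in> Pdeg (int r - int (max 1 k)) \<Longrightarrow>
        (\<forall>\<phi>\<in>Pdeg (int r - int (max 1 k)).
           Ih (\<lambda>t. (1 - t) ^ (k div 2) * (1 + t) ^ nat \<bar>(int k - 1) div 2\<bar> * \<psi> t * \<phi> t) = 0)
        \<Longrightarrow> \<psi> = (\<lambda>_. 0)"
    and A2: "\<exists>C0. \<forall>\<phi> :: real \<Rightarrow> real ^ 'd. Ck_on kI {-1..1} \<phi> \<longrightarrow>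
        norm (compI Ih \<phi>) \<le> C0 * (\<Sum>j\<le>kI. supn j {-1..1} \<phi> {-1..1})"
    and A3: "\<exists>C1. \<forall>m \<le> kI. \<forall>\<phi> :: real \<Rightarrow> real ^ 'd. Ck_on (max kIop m) {-1..1} \<phi> \<longrightarrow>
        supn m {-1..1} (compOp Iop \<phi>) {-1..1}
          \<le> C1 * (\<Sum>j\<le>max kIop m. supn j {-1..1} \<phi> {-1..1})"
  shows "\<exists>C. \<forall>a b. a < b \<and> b - a \<le> 1 \<longrightarrow>
     (\<forall>(v :: real \<Rightarrow> real ^ 'd) p.
        let jmn = jmin Ih Iop a b r k rc;
            jmx = max (max (k div 2 - 1) (max kI kIop) + 1) (max l jmn)
        in Ck_on jmx {a..b} v \<longrightarrow> is_Jn Ih Iop r k a b v p \<longrightarrow>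
           supn l {a..b} (\<lambda>t. v t - p t) {a<..b}
             \<le> C * (\<Sum>j = jmn..jmx. ((b - a) / 2) powr (real j - real l) * supn j {a..b} v {a<..b}))"
proof -
  have A2s: "\<exists>C0. \<forall>g. Ck_on kI {-1..1} g \<longrightarrow> \<bar>Ih g\<bar> \<le> C0 * (\<Sum>j\<le>kI. supn j {-1..1} g {-1..1})"
    by (rule A2_scalar[OF A2])
  have A3s: "\<exists>C1. \<forall>m\<le>kI. \<forall>g. Ck_on (max kIop m) {-1..1} g \<longrightarrow>
        supn m {-1..1} (Iop g) {-1..1} \<le> C1 * (\<Sum>j\<le>max kIop m. supn j {-1..1} g {-1..1})"
    by (rule A3_scalar[OF reg_Iop A3])
  interpret R: refset r k kI kIop Ih Iop
    by (rule refset.intro) (fact kr lin_Ih lin_Iop reg_Iop A1 A2s A3s)+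
  define n0 where "n0 = jmin Ih Iop (-1) 1 r k rc"
  have n0r: "n0 \<le> Suc r" and ex: "exact_for Ih Iop (-1) 1 (int n0 - 2) (int r - int k)"
    unfolding n0_def by (rule R.jmin_props)+
  define M where "M = max (max (k div 2 - 1) (max kI kIop) + 1) (max l n0)"
  have MM0: "R.M0 \<le> M" unfolding R.M0_def M_def max_def by (auto split: if_splits)
  have lM: "l \<le> M" and n0M: "n0 \<le> M" unfolding M_def by (simp_all add: le_max_iff_disj)
  obtain Cs where Cs0: "Cs \<ge> 0" and CS: "\<forall>f cp. Ck_on M II f \<longrightarrow> (\<forall>j<R.NN. R.datA (\<lambda>t. \<Sum>i<Suc r. cp i * t ^ i) j = R.datB f j) \<longrightarrow>
     (\<forall>t\<in>II. \<bar>nderiv l II (\<lambda>t. f t - (\<Sum>i<Suc r. cp i * t ^ i)) t\<bar> \<le> Cs * (\<Sum>j=n0..M. supn j II f {-1<..1}))"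
    using R.REF_scalar[OF MM0 lM n0M n0r ex] by blast
  define C where "C = real CARD('d) * Cs"
  show ?thesis
  proof (rule exI[of _ C], rule allI, rule allI, rule impI)
    fix a b :: real assume "a < b \<and> b - a \<le> 1"
    then have ab: "a < b" by simp
    have jm: "jmin Ih Iop a b r k rc = n0" unfolding n0_def by (rule jmin_ab[OF ab])
    show "\<forall>(v :: real \<Rightarrow> real ^ 'd) p.
        let jmn = jmin Ih Iop a b r k rc;
            jmx = max (max (k div 2 - 1) (max kI kIop) + 1) (max l jmn)
        in Ck_on jmx {a..b} v \<longrightarrow> is_Jn Ih Iop r k a b v p \<longrightarrow>
           supn l {a..b} (\<lambda>t. v t - p t) {a<..b}
             \<le> C * (\<Sum>j = jmn..jmx. ((b - a) / 2) powr (real j - real l) * supn j {a..b} v {a<..b})"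
      unfolding Let_def jm M_def[symmetric]
    proof (intro allI impI)
      fix v p :: "real \<Rightarrow> real ^ 'd"
      assume v: "Ck_on M {a..b} v" and J: "is_Jn Ih Iop r k a b v p"
      define h where "h = (b - a) / 2"
      have h0: "h > 0" unfolding h_def using ab by simp
      let ?T = "Tmap a b"
      have pV: "p \<in> VPdeg (int r)" using J unfolding is_Jn_def by blast
      then obtain cc where p: "p = (\<lambda>t. \<Sum>i<nat (int r + 1). t ^ i *\<^sub>R cc i)" unfolding VPdeg_def by blast
      have pC: "Ck_on N {a..b} p" for N unfolding p by (rule Ck_vpoly[OF ab])
      define V where "V = (\<lambda>s. v (?T s))"
      define P where "P = (\<lambda>s. p (?T s))"
      have HV: "Ck_on M II V \<and> (\<forall>j\<le>M. \<forall>s\<in>II. nderiv j II V s = h ^ j *\<^sub>R nderiv j {a..b} v (?T s))"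
        unfolding V_def h_def by (rule Ck_Tmap[OF ab v])
      have HP: "Ck_on M II P" unfolding P_def using Ck_Tmap[OF ab pC] by blast
      have Pcomp: "\<exists>cp. (\<lambda>s. P s $ c) = (\<lambda>s. \<Sum>i<Suc r. cp i * s ^ i)" for c
      proof -
        have "(\<lambda>t. \<Sum>i<nat (int r + 1). cc i $ c * t ^ i) \<in> Pdeg (int r)" unfolding Pdeg_def
          by (intro CollectI exI[of _ "\<lambda>i. cc i $ c"]) (rule refl)
        then have "(\<lambda>s. (\<lambda>t. \<Sum>i<nat (int r + 1). cc i $ c * t ^ i) ((b + a) / 2 + (b - a) / 2 * s)) \<in> Pdeg (int r)"
          by (rule pdeg_affine)
        then have "(\<lambda>s. P s $ c) \<in> Pdeg (int r)"
          unfolding P_def p Tmap_lin by (simp add: mult.commute)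
        moreover have e: "nat (int r + 1) = Suc r" by simp
        ultimately show ?thesis unfolding Pdeg_def e by (simp only: mem_Collect_eq)
      qed
      then have "\<forall>c. \<exists>cp. (\<lambda>s. P s $ c) = (\<lambda>s. \<Sum>i<Suc r. cp i * s ^ i)" by blast
      then obtain cpf where cpf: "\<And>c. (\<lambda>s. P s $ c) = (\<lambda>s. \<Sum>i<Suc r. cpf c i * s ^ i)"
        by (metis choice)
      have VP: "Ck_on M II (\<lambda>s. V s - P s) \<and> (\<forall>j\<le>M. \<forall>s\<in>II. nderiv j II (\<lambda>s. V s - P s) s = nderiv j II V s - nderiv j II P s)"
        by (rule Ck_diff[OF mm11 conjunct1[OF HV] HP])
      have compb: "\<bar>nderiv l II (\<lambda>s. V s - P s) s $ c\<bar> \<le> Cs * (\<Sum>j=n0..M. supn j II V {-1<..1})"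
        if s: "s \<in> II" for s c
      proof -
        have Vc: "Ck_on M II (\<lambda>s. V s $ c) \<and> (\<forall>j\<le>M. \<forall>s\<in>II. nderiv j II (\<lambda>s. V s $ c) s = nderiv j II V s $ c)"
          by (rule Ck_comp[OF mm11 conjunct1[OF HV]])
        have dat: "\<forall>j<R.NN. R.datA (\<lambda>t. \<Sum>i<Suc r. cpf c i * t ^ i) j = R.datB (\<lambda>s. V s $ c) j"
        proof -
          have "\<forall>j<R.NN. R.datA (\<lambda>s. P s $ c) j = R.datB (\<lambda>s. V s $ c) j"
            using R.data_transfer[OF ab MM0 v J] unfolding P_def V_def by blast
          then show ?thesis unfolding cpf .
        qed
        have b1: "\<bar>nderiv l II (\<lambda>t. V t $ c - (\<Sum>i<Suc r. cpf c i * t ^ i)) s\<bar> \<le> Cs * (\<Sum>j=n0..M. supn j II (\<lambda>s. V s $ c) {-1<..1})"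
          using CS conjunct1[OF Vc] dat s by blast
        have fe: "(\<lambda>t. V t $ c - (\<Sum>i<Suc r. cpf c i * t ^ i)) = (\<lambda>t. (V t - P t) $ c)"
          using cpf[of c] by (simp add: fun_eq_iff)
        have VPc: "nderiv l II (\<lambda>t. (V t - P t) $ c) s = nderiv l II (\<lambda>s. V s - P s) s $ c"
          using Ck_comp[OF mm11 conjunct1[OF VP], of c] lM s by blast
        have sc: "supn j II (\<lambda>s. V s $ c) {-1<..1} \<le> supn j II V {-1<..1}" if j: "j \<le> M" for j
        proof (rule supn_least)
          fix s' assume s': "s' \<in> {-1<..(1::real)}"
          have "norm (nderiv j II (\<lambda>s. V s $ c) s') = \<bar>nderiv j II V s' $ c\<bar>" using Vc j s' by simp
          also have "\<dots> \<le> norm (nderiv j II V s')" by (rule component_le_norm_cart)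
          also have "\<dots> \<le> supn j II V {-1<..1}" by (rule supn_upper[OF conjunct1[OF HV] j]) (use s' in auto)
          finally show "norm (nderiv j II (\<lambda>s. V s $ c) s') \<le> supn j II V {-1<..1}" .
        qed simp
        have "Cs * (\<Sum>j=n0..M. supn j II (\<lambda>s. V s $ c) {-1<..1}) \<le> Cs * (\<Sum>j=n0..M. supn j II V {-1<..1})"
          by (intro mult_left_mono sum_mono sc Cs0) auto
        then show ?thesis using b1 unfolding fe VPc by simp
      qed
      have sV: "supn j II V {-1<..1} \<le> h ^ j * supn j {a..b} v {a<..b}" if j: "j \<le> M" for j
      proof (rule supn_least)
        fix s assume s: "s \<in> {-1<..(1::real)}"
        have "norm (nderiv j II V s) = h ^ j * norm (nderiv j {a..b} v (?T s))" using HV j s h0 by simp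
        also have "\<dots> \<le> h ^ j * supn j {a..b} v {a<..b}"
          by (intro mult_left_mono supn_upper[OF v j]) (use h0 Tmap_mem_open[OF ab s] in auto)
        finally show "norm (nderiv j II V s) \<le> h ^ j * supn j {a..b} v {a<..b}" .
      qed simp
      define RS where "RS = (\<Sum>j = n0..M. h powr (real j - real l) * supn j {a..b} v {a<..b})"
      have key: "norm (nderiv l {a..b} (\<lambda>t. v t - p t) t) \<le> C * RS" if t: "t \<in> {a<..b}" for t
      proof -
        define s where "s = Tinv a b t"
        have s: "s \<in> {-1<..1}" unfolding s_def by (rule Tinv_mem_open[OF ab t])
        have Ts: "?T s = t" unfolding s_def by (rule Tmap_Tinv[OF ab])
        have w: "Ck_on M {a..b} (\<lambda>t. v t - p t)" using Ck_diff[OF ab v pC] by blast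
        have Hw: "nderiv l II (\<lambda>s. v (?T s) - p (?T s)) s = h ^ l *\<^sub>R nderiv l {a..b} (\<lambda>t. v t - p t) (?T s)"
          using Ck_Tmap[OF ab w] lM s unfolding h_def by auto
        have "norm (nderiv l II (\<lambda>s. V s - P s) s) \<le> (\<Sum>c\<in>UNIV. \<bar>nderiv l II (\<lambda>s. V s - P s) s $ c\<bar>)"
          by (rule norm_le_l1_cart)
        also have "\<dots> \<le> (\<Sum>c\<in>(UNIV::'d set). Cs * (\<Sum>j=n0..M. supn j II V {-1<..1}))"
          by (intro sum_mono compb) (use s in auto)
        also have "\<dots> = real CARD('d) * Cs * (\<Sum>j=n0..M. supn j II V {-1<..1})" by simp
        also have "\<dots> \<le> real CARD('d) * Cs * (\<Sum>j=n0..M. h ^ j * supn j {a..b} v {a<..b})"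
          by (intro mult_left_mono sum_mono sV) (use Cs0 in auto)
        finally have b: "norm (nderiv l II (\<lambda>s. V s - P s) s) \<le> C * (\<Sum>j=n0..M. h ^ j * supn j {a..b} v {a<..b})"
          unfolding C_def .
        have "norm (nderiv l II (\<lambda>s. V s - P s) s) = h ^ l * norm (nderiv l {a..b} (\<lambda>t. v t - p t) t)"
          using Hw h0 Ts unfolding V_def P_def by simp
        then have "h ^ l * norm (nderiv l {a..b} (\<lambda>t. v t - p t) t) \<le> C * (\<Sum>j=n0..M. h ^ j * supn j {a..b} v {a<..b})"
          using b by simp
        moreover have "C * (\<Sum>j=n0..M. h ^ j * supn j {a..b} v {a<..b}) = h ^ l * (C * RS)"
        proof -
          have hh: "h ^ j = h ^ l * h powr (real j - real l)" for j
            using h0 by (simp add: powr_diff powr_realpow)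
          have "C * (\<Sum>j=n0..M. h ^ j * supn j {a..b} v {a<..b}) = (\<Sum>j=n0..M. C * (h ^ j * supn j {a..b} v {a<..b}))"
            by (rule sum_distrib_left)
          also have "\<dots> = (\<Sum>j=n0..M. h ^ l * (C * (h powr (real j - real l) * supn j {a..b} v {a<..b})))"
          proof (intro sum.cong refl)
            fix j
            show "C * (h ^ j * supn j {a..b} v {a<..b}) = h ^ l * (C * (h powr (real j - real l) * supn j {a..b} v {a<..b}))"
              by (subst hh[of j]) (simp only: mult_ac)
          qed
          also have "\<dots> = h ^ l * (C * RS)" unfolding RS_def by (simp only: sum_distrib_left)
          finally show ?thesis .
        qed
        ultimately show ?thesis using h0 by simp
      qed
      show "supn l {a..b} (\<lambda>t. v t - p t) {a<..b}
             \<le> C * (\<Sum>j = n0..M. ((b - a) / 2) powr (real j - real l) * supn j {a..b} v {a<..b})"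
        unfolding h_def[symmetric] RS_def[symmetric]
        by (rule supn_least) (use ab key in auto)
    qed
  qed
qed


end
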